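(* Let $k>l\ge0$ be integers, $\xi\in\mathbb{C}$, $f:\mathbb{N}\to[0,\infty)$, and $A=\xi(a^\dagger)^ka^l+\xi^*(a^\dagger)^la^k+f(a^\dagger a)$ with domain $\mathcal{D}_0$. Assume there exist $\kappa\ge2$ and $N\in\mathbb{N}$ such that $f(n)\ge\kappa|\xi|\beta^{kl}_n$ for all $n\ge N$. Then $A$ is essentially self-adjoint. In particular, if $\kappa>2$, then $A$ is bounded from below by $-2|\xi|\beta^{kl}_{N-1}\kappa/(\kappa-2)$, i.e. $\langle\psi,A\psi\rangle\ge-\frac{2|\xi|\beta^{kl}_{N-1}\kappa}{\kappa-2}\|\psi\|^2$ for all $\psi\in\mathcal{D}_0$.
   Context: $\mathbb{N}=\{0,1,2,\dots\}$. $\mathcal{H}$ is a separable complex Hilbert space with orthonormal basis $(\phi_n)_{n\in\mathbb{N}}$; $\mathcal{D}_0$ is the set of finite linear combinations of the $\phi_n$. The operators $a,a^\dagger$ have domain $\mathcal{D}_0$ and act by $a\phi_n=\sqrt{n}\,\phi_{n-1}$ ($a\phi_0=0$), $a^\dagger\phi_n=\sqrt{n+1}\,\phi_{n+1}$, extended linearly. $f(a^\dagger a)$ has domain $\mathcal{D}_0$ and $f(a^\dagger a)\phi_n=f(n)\phi_n$. For integers $x$ and $s\ge0$, $(x,s)=x(x+1)\cdots(x+s-1)$ ($=1$ if $s=0$), with the convention $(x,s)=0$ whenever $x$ is a negative integer; for integers $n$ and $k,l\ge0$, $\beta^{kl}_n=\sqrt{(n-l+1,l)(n-l+1,k)}$.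 *)

theory Defs
  imports "HOL-Analysis.Analysis"
begin

text \<open>The Hilbert space H with orthonormal basis phi_n is modelled concretely as l2(N):
  vectors are square-summable sequences nat => complex, phi_n is the indicator of n.\<close>

definition ell2 :: "(nat \<Rightarrow> complex) set" where
  "ell2 = {x. summable (\<lambda>n. (cmod (x n))\<^sup>2)}"

definition l2inner :: "(nat \<Rightarrow> complex) \<Rightarrow> (nat \<Rightarrow> complex) \<Rightarrow> complex" where
  "l2inner x y = (\<Sum>n. cnj (x n) * y n)"

definition l2norm :: "(nat \<Rightarrow> complex) \<Rightarrow> real" where
  "l2norm x = sqrt (\<Sum>n. (cmod (x n))\<^sup>2)"

text \<open>D_0: finite linear combinations of the basis vectors = finitely supported sequences.\<close>
definition D0 :: "(nat \<Rightarrow> complex) set" where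
  "D0 = {x. finite {n. x n \<noteq> 0}}"

text \<open>Annihilation / creation operators (on coefficient sequences):
  a phi_n = sqrt n phi_(n-1), a^dagger phi_n = sqrt (n+1) phi_(n+1).\<close>
definition ann :: "(nat \<Rightarrow> complex) \<Rightarrow> (nat \<Rightarrow> complex)" where
  "ann x = (\<lambda>n. complex_of_real (sqrt (real (n + 1))) * x (n + 1))"

definition cre :: "(nat \<Rightarrow> complex) \<Rightarrow> (nat \<Rightarrow> complex)" where
  "cre x = (\<lambda>n. if n = 0 then 0 else complex_of_real (sqrt (real n)) * x (n - 1))"

definition numfun :: "(nat \<Rightarrow> real) \<Rightarrow> (nat \<Rightarrow> complex) \<Rightarrow> (nat \<Rightarrow> complex)" where
  "numfun f x = (\<lambda>n. complex_of_real (f n) * x n)"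

definition A_op :: "nat \<Rightarrow> nat \<Rightarrow> complex \<Rightarrow> (nat \<Rightarrow> real) \<Rightarrow> (nat \<Rightarrow> complex) \<Rightarrow> (nat \<Rightarrow> complex)" where
  "A_op k l \<xi> f x = (\<lambda>n. \<xi> * (cre ^^ k) ((ann ^^ l) x) n
                        + cnj \<xi> * (cre ^^ l) ((ann ^^ k) x) n
                        + numfun f x n)"

text \<open>Operators are represented by their graphs (subsets of H x H).\<close>
definition graph_D0 :: "((nat \<Rightarrow> complex) \<Rightarrow> (nat \<Rightarrow> complex)) \<Rightarrow> ((nat \<Rightarrow> complex) \<times> (nat \<Rightarrow> complex)) set" where
  "graph_D0 T = {(x, T x) | x. x \<in> D0}"

definition graph_closure :: "((nat \<Rightarrow> complex) \<times> (nat \<Rightarrow> complex)) set \<Rightarrow> ((nat \<Rightarrow> complex) \<times> (nat \<Rightarrow> complex)) set" where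
  "graph_closure G = {(x, y). x \<in> ell2 \<and> y \<in> ell2 \<and>
      (\<exists>s :: nat \<Rightarrow> (nat \<Rightarrow> complex) \<times> (nat \<Rightarrow> complex). (\<forall>j. s j \<in> G) \<and>
         (\<lambda>j. l2norm (\<lambda>n. fst (s j) n - x n)) \<longlonglongrightarrow> 0 \<and>
         (\<lambda>j. l2norm (\<lambda>n. snd (s j) n - y n)) \<longlonglongrightarrow> 0)}"

definition graph_adjoint :: "((nat \<Rightarrow> complex) \<times> (nat \<Rightarrow> complex)) set \<Rightarrow> ((nat \<Rightarrow> complex) \<times> (nat \<Rightarrow> complex)) set" where
  "graph_adjoint G = {(u, v). u \<in> ell2 \<and> v \<in> ell2 \<and> (\<forall>(x, y) \<in> G. l2inner u y = l2inner v x)}"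

definition self_adjoint_graph :: "((nat \<Rightarrow> complex) \<times> (nat \<Rightarrow> complex)) set \<Rightarrow> bool" where
  "self_adjoint_graph G \<longleftrightarrow> G = graph_adjoint G"

definition ess_self_adjoint :: "((nat \<Rightarrow> complex) \<times> (nat \<Rightarrow> complex)) set \<Rightarrow> bool" where
  "ess_self_adjoint G \<longleftrightarrow> self_adjoint_graph (graph_closure G)"

definition rising :: "int \<Rightarrow> nat \<Rightarrow> int" where
  "rising x s = (if x < 0 then 0 else (\<Prod>i<s. x + int i))"

definition beta :: "nat \<Rightarrow> nat \<Rightarrow> int \<Rightarrow> real" where
  "beta k l n = sqrt (real_of_int (rising (n - int l + 1) l * rising (n - int l + 1) k))"

end

theory Submission
  imports Defs
begin


lemma ell2_iff: "x \<in> ell2 \<longleftrightarrow> summable (\<lambda>n. (cmod (x n))\<^sup>2)"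
  by (simp add: ell2_def)

lemma sq_ineq: fixes p q :: real shows "2*p*q \<le> p\<^sup>2+q\<^sup>2"
proof -
  have "0 \<le> (p-q)\<^sup>2" by simp
  thus ?thesis by (simp add: power2_diff)
qed

lemma sq_add_le: "(cmod (a + b))\<^sup>2 \<le> 2 * (cmod a)\<^sup>2 + 2 * (cmod b)\<^sup>2"
proof -
  have "cmod (a+b) \<le> cmod a + cmod b" by (rule norm_triangle_ineq)
  hence "(cmod (a+b))\<^sup>2 \<le> (cmod a + cmod b)\<^sup>2" by (simp add: power_mono)
  also have "\<dots> = (cmod a)\<^sup>2 + (cmod b)\<^sup>2 + 2 * cmod a * cmod b" by (simp add: power2_sum)
  also have "\<dots> \<le> 2 * (cmod a)\<^sup>2 + 2 * (cmod b)\<^sup>2" using sq_ineq[of "cmod a" "cmod b"] by linarith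
  finally show ?thesis .
qed

lemma ell2_add: "x \<in> ell2 \<Longrightarrow> y \<in> ell2 \<Longrightarrow> (\<lambda>n. x n + y n) \<in> ell2"
  unfolding ell2_iff
  apply (rule summable_comparison_test'[where g="\<lambda>n. 2 * (cmod (x n))\<^sup>2 + 2 * (cmod (y n))\<^sup>2" and N=0])
  using sq_add_le by (auto intro!: summable_add summable_mult)

lemma ell2_scale: "x \<in> ell2 \<Longrightarrow> (\<lambda>n. c * x n) \<in> ell2"
  unfolding ell2_iff by (simp add: norm_mult power_mult_distrib summable_mult)

lemma ell2_uminus: "x \<in> ell2 \<Longrightarrow> (\<lambda>n. - x n) \<in> ell2"
  unfolding ell2_iff by simp

lemma ell2_diff: "x \<in> ell2 \<Longrightarrow> y \<in> ell2 \<Longrightarrow> (\<lambda>n. x n - y n) \<in> ell2"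
  using ell2_add[OF _ ell2_uminus, of x y] by simp

lemma D0_ell2: "x \<in> D0 \<Longrightarrow> x \<in> ell2"
  unfolding D0_def ell2_iff by (auto intro!: summable_finite)

definition n2 :: "(nat \<Rightarrow> complex) \<Rightarrow> real" where
  "n2 x = (\<Sum>n. (cmod (x n))\<^sup>2)"

lemma n2_nonneg: "x \<in> ell2 \<Longrightarrow> 0 \<le> n2 x"
  unfolding n2_def ell2_iff by (auto intro: suminf_nonneg)

lemma l2norm_n2: "l2norm x = sqrt (n2 x)"
  by (simp add: l2norm_def n2_def)

lemma l2norm_sq: "x \<in> ell2 \<Longrightarrow> (l2norm x)\<^sup>2 = n2 x"
  by (simp add: l2norm_n2 n2_nonneg)

lemma l2norm_nonneg: "x \<in> ell2 \<Longrightarrow> 0 \<le> l2norm x"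
  by (simp add: l2norm_n2 n2_nonneg)

lemma inner_abs_summable:
  assumes "x \<in> ell2" "y \<in> ell2"
  shows "summable (\<lambda>n. cmod (x n) * cmod (y n))"
  apply (rule summable_comparison_test'[where g="\<lambda>n. (cmod (x n))\<^sup>2 + (cmod (y n))\<^sup>2" and N=0])
  using assms unfolding ell2_iff
   apply (auto intro!: summable_add)
  subgoal for n
  proof -
    have "2 * cmod (x n) * cmod (y n) \<le> (cmod (x n))\<^sup>2 + (cmod (y n))\<^sup>2" by (rule sq_ineq)
    moreover have "0 \<le> cmod (x n) * cmod (y n)" by simp
    ultimately show ?thesis by (simp only: real_norm_def abs_of_nonneg)
  qed
  done

lemma inner_summable:
  assumes "x \<in> ell2" "y \<in> ell2"
  shows "summable (\<lambda>n. cnj (x n) * y n)"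
  using inner_abs_summable[OF assms]
  by (rule summable_comparison_test'[where N=0]) (simp add: norm_mult)

lemma l2inner_add_right:
  assumes "x \<in> ell2" "y \<in> ell2" "z \<in> ell2"
  shows "l2inner x (\<lambda>n. y n + z n) = l2inner x y + l2inner x z"
  unfolding l2inner_def using inner_summable[OF assms(1,2)] inner_summable[OF assms(1,3)]
  by (simp add: distrib_left suminf_add)

lemma l2inner_add_left:
  assumes "x \<in> ell2" "y \<in> ell2" "z \<in> ell2"
  shows "l2inner (\<lambda>n. x n + y n) z = l2inner x z + l2inner y z"
  unfolding l2inner_def using inner_summable[OF assms(1,3)] inner_summable[OF assms(2,3)]
  by (simp add: distrib_right suminf_add)

lemma l2inner_diff_right:
  assumes "x \<in> ell2" "y \<in> ell2" "z \<in> ell2"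
  shows "l2inner x (\<lambda>n. y n - z n) = l2inner x y - l2inner x z"
  unfolding l2inner_def using inner_summable[OF assms(1,2)] inner_summable[OF assms(1,3)]
  by (simp add: right_diff_distrib suminf_diff)

lemma l2inner_diff_left:
  assumes "x \<in> ell2" "y \<in> ell2" "z \<in> ell2"
  shows "l2inner (\<lambda>n. x n - y n) z = l2inner x z - l2inner y z"
  unfolding l2inner_def using inner_summable[OF assms(1,3)] inner_summable[OF assms(2,3)]
  by (simp add: left_diff_distrib suminf_diff)

lemma l2inner_scale_right:
  assumes "x \<in> ell2" "y \<in> ell2"
  shows "l2inner x (\<lambda>n. c * y n) = c * l2inner x y"
proof -
  have "(\<Sum>n. cnj (x n) * (c * y n)) = (\<Sum>n. c * (cnj (x n) * y n))"
    by (simp add: mult.left_commute)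
  also have "\<dots> = c * (\<Sum>n. cnj (x n) * y n)"
    using inner_summable[OF assms] by (rule suminf_mult)
  finally show ?thesis unfolding l2inner_def .
qed

lemma l2inner_scale_left:
  assumes "x \<in> ell2" "y \<in> ell2"
  shows "l2inner (\<lambda>n. c * x n) y = cnj c * l2inner x y"
proof -
  have "(\<Sum>n. cnj (c * x n) * y n) = (\<Sum>n. cnj c * (cnj (x n) * y n))"
    by (simp add: mult.assoc)
  also have "\<dots> = cnj c * (\<Sum>n. cnj (x n) * y n)"
    using inner_summable[OF assms] by (rule suminf_mult)
  finally show ?thesis unfolding l2inner_def .
qed

lemma l2inner_cnj:
  assumes "x \<in> ell2" "y \<in> ell2"
  shows "l2inner y x = cnj (l2inner x y)"
proof -
  have "(\<lambda>n. cnj (cnj (x n) * y n)) sums cnj (\<Sum>n. cnj (x n) * y n)"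
    using sums_cnj[THEN iffD2, OF summable_sums[OF inner_summable[OF assms]]] .
  moreover have "(\<lambda>n. cnj (cnj (x n) * y n)) = (\<lambda>n. cnj (y n) * x n)"
    by (rule ext) (metis complex_cnj_cnj complex_cnj_mult mult.commute)
  ultimately have "(\<lambda>n. cnj (y n) * x n) sums cnj (\<Sum>n. cnj (x n) * y n)" by simp
  thus ?thesis unfolding l2inner_def by (simp add: sums_iff)
qed

lemma l2inner_self:
  assumes "x \<in> ell2"
  shows "l2inner x x = complex_of_real (n2 x)"
proof -
  have s: "summable (\<lambda>n. (cmod (x n))\<^sup>2)" using assms ell2_iff by blast
  have "(\<lambda>n. cnj (x n) * x n) = (\<lambda>n. complex_of_real ((cmod (x n))\<^sup>2))"
    by (rule ext) (metis complex_norm_square mult.commute)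
  hence "l2inner x x = (\<Sum>n. complex_of_real ((cmod (x n))\<^sup>2))" unfolding l2inner_def by simp
  also have "\<dots> = complex_of_real (n2 x)" unfolding n2_def by (rule suminf_of_real[OF s, symmetric])
  finally show ?thesis .
qed

lemma n2_inner: "x \<in> ell2 \<Longrightarrow> n2 x = Re (l2inner x x)"
  by (simp add: l2inner_self)

lemma sum_abs_le:
  assumes "x \<in> ell2" "y \<in> ell2"
  shows "(\<Sum>n. cmod (x n) * cmod (y n)) \<le> l2norm x * l2norm y"
proof (rule suminf_le_const[OF inner_abs_summable[OF assms]])
  fix K
  have "(\<Sum>n<K. cmod (x n) * cmod (y n)) = (\<Sum>n<K. \<bar>cmod (x n)\<bar> * \<bar>cmod (y n)\<bar>)" by simp
  also have "\<dots> \<le> L2_set (\<lambda>n. cmod (x n)) {..<K} * L2_set (\<lambda>n. cmod (y n)) {..<K}"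
    by (rule L2_set_mult_ineq)
  also have "\<dots> \<le> l2norm x * l2norm y"
  proof (rule mult_mono)
    show "L2_set (\<lambda>n. cmod (x n)) {..<K} \<le> l2norm x"
      unfolding L2_set_def l2norm_def
      using sum_le_suminf[of "\<lambda>n. (cmod (x n))\<^sup>2" "{..<K}"] assms(1) ell2_iff by auto
    show "L2_set (\<lambda>n. cmod (y n)) {..<K} \<le> l2norm y"
      unfolding L2_set_def l2norm_def
      using sum_le_suminf[of "\<lambda>n. (cmod (y n))\<^sup>2" "{..<K}"] assms(2) ell2_iff by auto
    show "0 \<le> l2norm x" by (rule l2norm_nonneg[OF assms(1)])
    show "0 \<le> L2_set (\<lambda>n. cmod (y n)) {..<K}" by (rule L2_set_nonneg)
  qed
  finally show "(\<Sum>n<K. cmod (x n) * cmod (y n)) \<le> l2norm x * l2norm y" .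
qed

lemma cauchy_schwarz:
  assumes "x \<in> ell2" "y \<in> ell2"
  shows "cmod (l2inner x y) \<le> l2norm x * l2norm y"
proof -
  have "cmod (l2inner x y) \<le> (\<Sum>n. cmod (x n) * cmod (y n))"
    unfolding l2inner_def
    by (rule norm_suminf_le[OF _ inner_abs_summable[OF assms]]) (simp add: norm_mult)
  also have "\<dots> \<le> l2norm x * l2norm y" by (rule sum_abs_le[OF assms])
  finally show ?thesis .
qed

lemma n2_add:
  assumes "x \<in> ell2" "y \<in> ell2"
  shows "n2 (\<lambda>n. x n + y n) = n2 x + n2 y + 2 * Re (l2inner x y)"
proof -
  have xy: "(\<lambda>n. x n + y n) \<in> ell2" by (rule ell2_add[OF assms])
  have "l2inner (\<lambda>n. x n + y n) (\<lambda>n. x n + y n)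
        = l2inner x x + l2inner x y + (l2inner y x + l2inner y y)"
    using assms xy by (simp add: l2inner_add_left l2inner_add_right)
  hence "n2 (\<lambda>n. x n + y n) = Re (l2inner x x + l2inner x y + (l2inner y x + l2inner y y))"
    using n2_inner[OF xy] by simp
  also have "\<dots> = n2 x + n2 y + 2 * Re (l2inner x y)"
    using l2inner_cnj[OF assms] n2_inner[OF assms(1)] n2_inner[OF assms(2)] by simp
  finally show ?thesis .
qed

lemma n2_diff:
  assumes "x \<in> ell2" "y \<in> ell2"
  shows "n2 (\<lambda>n. x n - y n) = n2 x + n2 y - 2 * Re (l2inner x y)"
proof -
  have xy: "(\<lambda>n. x n - y n) \<in> ell2" by (rule ell2_diff[OF assms])
  have "l2inner (\<lambda>n. x n - y n) (\<lambda>n. x n - y n)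
        = l2inner x x - l2inner x y - (l2inner y x - l2inner y y)"
    using assms xy by (simp add: l2inner_diff_left l2inner_diff_right)
  hence "n2 (\<lambda>n. x n - y n) = Re (l2inner x x - l2inner x y - (l2inner y x - l2inner y y))"
    using n2_inner[OF xy] by simp
  also have "\<dots> = n2 x + n2 y - 2 * Re (l2inner x y)"
    using l2inner_cnj[OF assms] n2_inner[OF assms(1)] n2_inner[OF assms(2)] by simp
  finally show ?thesis .
qed

lemma n2_scale: "x \<in> ell2 \<Longrightarrow> n2 (\<lambda>n. c * x n) = (cmod c)\<^sup>2 * n2 x"
  unfolding n2_def ell2_iff by (simp add: norm_mult power_mult_distrib suminf_mult)

lemma l2norm_scale: "x \<in> ell2 \<Longrightarrow> l2norm (\<lambda>n. c * x n) = cmod c * l2norm x"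
  unfolding l2norm_n2 by (simp add: n2_scale real_sqrt_mult)

lemma l2norm_triangle:
  assumes "x \<in> ell2" "y \<in> ell2"
  shows "l2norm (\<lambda>n. x n + y n) \<le> l2norm x + l2norm y"
proof -
  have "n2 (\<lambda>n. x n + y n) \<le> (l2norm x + l2norm y)\<^sup>2"
  proof -
    have "Re (l2inner x y) \<le> l2norm x * l2norm y"
      using cauchy_schwarz[OF assms] complex_Re_le_cmod order_trans by blast
    thus ?thesis using n2_add[OF assms] l2norm_sq[OF assms(1)] l2norm_sq[OF assms(2)]
      by (simp add: power2_sum)
  qed
  hence "sqrt (n2 (\<lambda>n. x n + y n)) \<le> l2norm x + l2norm y"
    using l2norm_nonneg[OF assms(1)] l2norm_nonneg[OF assms(2)] real_le_lsqrt by auto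
  thus ?thesis by (simp add: l2norm_n2)
qed

lemma l2norm_triangle_diff:
  assumes "x \<in> ell2" "y \<in> ell2"
  shows "l2norm (\<lambda>n. x n - y n) \<le> l2norm x + l2norm y"
  using l2norm_triangle[OF assms(1) ell2_uminus[OF assms(2)]] l2norm_scale[OF assms(2), of "-1"] by simp

lemma coord_le_n2:
  assumes "x \<in> ell2"
  shows "(cmod (x n))\<^sup>2 \<le> n2 x"
proof -
  have "(\<Sum>i\<in>{n}. (cmod (x i))\<^sup>2) \<le> n2 x"
    unfolding n2_def by (rule sum_le_suminf) (use assms ell2_iff in auto)
  thus ?thesis by simp
qed

lemma coord_le:
  assumes "x \<in> ell2"
  shows "cmod (x n) \<le> l2norm x"
  using coord_le_n2[OF assms, of n] unfolding l2norm_n2 using real_le_rsqrt by blast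

lemma ell2_complete:
  assumes xs: "\<And>j. x j \<in> ell2"
    and C: "\<And>e. e > 0 \<Longrightarrow> \<exists>M. \<forall>i\<ge>M. \<forall>j\<ge>M. n2 (\<lambda>n. x i n - x j n) < e"
  shows "\<exists>w\<in>ell2. (\<lambda>j. n2 (\<lambda>n. x j n - w n)) \<longlonglongrightarrow> 0"
proof -
  have cauchy_n: "Cauchy (\<lambda>j. x j n)" for n
  proof (rule metric_CauchyI)
    fix e :: real assume e: "e>0"
    then obtain M where M: "\<forall>i\<ge>M. \<forall>j\<ge>M. n2 (\<lambda>n. x i n - x j n) < e\<^sup>2" using C[of "e\<^sup>2"] by auto
    show "\<exists>M. \<forall>m\<ge>M. \<forall>k\<ge>M. dist (x m n) (x k n) < e"
    proof (intro exI allI impI)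
      fix m k assume "M \<le> m" "M \<le> k"
      hence "(cmod (x m n - x k n))\<^sup>2 < e\<^sup>2"
        using coord_le_n2[OF ell2_diff[OF xs[of m] xs[of k]], of n] M by force
      thus "dist (x m n) (x k n) < e" using e by (simp add: dist_norm power_less_imp_less_base)
    qed
  qed
  define w where "w n = lim (\<lambda>j. x j n)" for n
  have wlim: "(\<lambda>j. x j n) \<longlonglongrightarrow> w n" for n
    using cauchy_n Cauchy_convergent_iff convergent_LIMSEQ_iff w_def by metis
  have bound: "(\<lambda>n. x j n - w n) \<in> ell2 \<and> n2 (\<lambda>n. x j n - w n) \<le> e"
    if M: "\<forall>i\<ge>M. \<forall>j\<ge>M. n2 (\<lambda>n. x i n - x j n) < e" and j: "M \<le> j" for M e j
  proof -
    have ps: "(\<Sum>n<K. (cmod (x j n - w n))\<^sup>2) \<le> e" for K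
    proof -
      have "(\<lambda>i. \<Sum>n<K. (cmod (x j n - x i n))\<^sup>2) \<longlonglongrightarrow> (\<Sum>n<K. (cmod (x j n - w n))\<^sup>2)"
        by (intro tendsto_intros wlim)
      moreover have "\<forall>i\<ge>M. (\<Sum>n<K. (cmod (x j n - x i n))\<^sup>2) \<le> e"
      proof (intro allI impI)
        fix i assume i: "M \<le> i"
        have "(\<Sum>n<K. (cmod (x j n - x i n))\<^sup>2) \<le> n2 (\<lambda>n. x j n - x i n)"
          unfolding n2_def using ell2_diff[OF xs[of j] xs[of i]] unfolding ell2_iff
          by (intro sum_le_suminf) auto
        also have "\<dots> < e" using M j i by auto
        finally show "(\<Sum>n<K. (cmod (x j n - x i n))\<^sup>2) \<le> e" by simp
      qed
      ultimately show ?thesis by (intro LIMSEQ_le_const2) auto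
    qed
    have summ: "summable (\<lambda>n. (cmod (x j n - w n))\<^sup>2)"
      by (rule summableI_nonneg_bounded[where x=e]) (auto intro: ps)
    show ?thesis
    proof
      show "(\<lambda>n. x j n - w n) \<in> ell2" using summ ell2_iff by simp
      show "n2 (\<lambda>n. x j n - w n) \<le> e" unfolding n2_def by (rule suminf_le_const[OF summ ps])
    qed
  qed
  obtain M where M: "\<forall>i\<ge>M. \<forall>j\<ge>M. n2 (\<lambda>n. x i n - x j n) < 1" using C[of 1] by auto
  have "(\<lambda>n. x M n - w n) \<in> ell2" using bound[OF M, of M] by simp
  from ell2_diff[OF xs[of M] this] have wl2: "w \<in> ell2" by simp
  have "(\<lambda>j. n2 (\<lambda>n. x j n - w n)) \<longlonglongrightarrow> 0"
  proof (rule LIMSEQ_I)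
    fix r :: real assume r: "0 < r"
    obtain M where M: "\<forall>i\<ge>M. \<forall>j\<ge>M. n2 (\<lambda>n. x i n - x j n) < r/2" using C[of "r/2"] r by auto
    show "\<exists>no. \<forall>j\<ge>no. norm (n2 (\<lambda>n. x j n - w n) - 0) < r"
    proof (intro exI allI impI)
      fix j assume j: "M \<le> j"
      from bound[OF M j] have "(\<lambda>n. x j n - w n) \<in> ell2" "n2 (\<lambda>n. x j n - w n) \<le> r/2" by auto
      with n2_nonneg[OF this(1)] r show "norm (n2 (\<lambda>n. x j n - w n) - 0) < r" by simp
    qed
  qed
  with wl2 show ?thesis by blast
qed

lemma n2_tendsto_iff:
  "(\<lambda>j. l2norm (y j)) \<longlonglongrightarrow> 0 \<longleftrightarrow> (\<lambda>j. n2 (y j)) \<longlonglongrightarrow> 0"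
  if "\<And>j. y j \<in> ell2" for y :: "nat \<Rightarrow> nat \<Rightarrow> complex"
proof
  assume "(\<lambda>j. l2norm (y j)) \<longlonglongrightarrow> 0"
  hence "(\<lambda>j. (l2norm (y j))\<^sup>2) \<longlonglongrightarrow> 0\<^sup>2" by (intro tendsto_intros)
  thus "(\<lambda>j. n2 (y j)) \<longlonglongrightarrow> 0" using l2norm_sq[OF that] by simp
next
  assume "(\<lambda>j. n2 (y j)) \<longlonglongrightarrow> 0"
  hence "(\<lambda>j. sqrt (n2 (y j))) \<longlonglongrightarrow> sqrt 0" by (intro tendsto_intros)
  thus "(\<lambda>j. l2norm (y j)) \<longlonglongrightarrow> 0" by (simp add: l2norm_n2)
qed

lemma l2norm_diff_sym:
  assumes "a \<in> ell2" "b \<in> ell2"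
  shows "l2norm (\<lambda>n. a n - b n) = l2norm (\<lambda>n. b n - a n)"
  using l2norm_scale[OF ell2_diff[OF assms], of "-1"] by simp

lemma l2norm_rev_triangle:
  assumes "a \<in> ell2" "b \<in> ell2"
  shows "\<bar>l2norm a - l2norm b\<bar> \<le> l2norm (\<lambda>n. a n - b n)"
proof -
  have "l2norm a \<le> l2norm (\<lambda>n. a n - b n) + l2norm b"
    using l2norm_triangle[OF ell2_diff[OF assms] assms(2)] by simp
  moreover have "l2norm b \<le> l2norm (\<lambda>n. b n - a n) + l2norm a"
    using l2norm_triangle[OF ell2_diff[OF assms(2,1)] assms(1)] by simp
  ultimately show ?thesis using l2norm_diff_sym[OF assms] by linarith
qed

lemma l2norm_tendsto:
  assumes "\<And>j. a j \<in> ell2" "b \<in> ell2" "(\<lambda>j. l2norm (\<lambda>n. a j n - b n)) \<longlonglongrightarrow> 0"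
  shows "(\<lambda>j. l2norm (a j)) \<longlonglongrightarrow> l2norm b"
proof -
  have "(\<lambda>j. l2norm (a j) - l2norm b) \<longlonglongrightarrow> 0"
    by (rule Lim_null_comparison[OF _ assms(3)])
       (use l2norm_rev_triangle[OF assms(1) assms(2)] in auto)
  thus ?thesis by (rule LIM_zero_cancel)
qed

lemma n2_tendsto:
  assumes "\<And>j. a j \<in> ell2" "b \<in> ell2" "(\<lambda>j. l2norm (\<lambda>n. a j n - b n)) \<longlonglongrightarrow> 0"
  shows "(\<lambda>j. n2 (a j)) \<longlonglongrightarrow> n2 b"
proof -
  have "(\<lambda>j. (l2norm (a j))\<^sup>2) \<longlonglongrightarrow> (l2norm b)\<^sup>2"
    by (intro tendsto_intros l2norm_tendsto[OF assms])
  thus ?thesis using l2norm_sq assms by simp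
qed

lemma norm3: "cmod (p + q + r) \<le> cmod p + cmod q + cmod r"
proof -
  have "cmod (p + q + r) \<le> cmod (p + q) + cmod r" by (rule norm_triangle_ineq)
  moreover have "cmod (p + q) \<le> cmod p + cmod q" by (rule norm_triangle_ineq)
  ultimately show ?thesis by linarith
qed

lemma inner_tendsto:
  assumes a: "\<And>j. a j \<in> ell2" and b: "\<And>j. b j \<in> ell2" and x: "x \<in> ell2" and y: "y \<in> ell2"
    and ax: "(\<lambda>j. l2norm (\<lambda>n. a j n - x n)) \<longlonglongrightarrow> 0"
    and by': "(\<lambda>j. l2norm (\<lambda>n. b j n - y n)) \<longlonglongrightarrow> 0"
  shows "(\<lambda>j. l2inner (a j) (b j)) \<longlonglongrightarrow> l2inner x y"
proof -
  define A where "A j = (\<lambda>n. a j n - x n)" for j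
  define B where "B j = (\<lambda>n. b j n - y n)" for j
  have A2: "A j \<in> ell2" for j unfolding A_def by (rule ell2_diff[OF a x])
  have B2: "B j \<in> ell2" for j unfolding B_def by (rule ell2_diff[OF b y])
  have eq: "l2inner (a j) (b j) - l2inner x y = l2inner (A j) (B j) + l2inner (A j) y + l2inner x (B j)" for j
  proof -
    have e1: "l2inner (A j) (B j) = l2inner (a j) (B j) - l2inner x (B j)"
      unfolding A_def by (rule l2inner_diff_left[OF a x B2])
    have e2: "l2inner (a j) (B j) = l2inner (a j) (b j) - l2inner (a j) y"
      unfolding B_def by (rule l2inner_diff_right[OF a b y])
    have e3: "l2inner (A j) y = l2inner (a j) y - l2inner x y"
      unfolding A_def by (rule l2inner_diff_left[OF a x y])
    show ?thesis unfolding e1 e2 e3 by simp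
  qed
  have bnd: "cmod (l2inner (a j) (b j) - l2inner x y)
      \<le> l2norm (A j) * l2norm (B j) + l2norm (A j) * l2norm y + l2norm x * l2norm (B j)" for j
  proof -
    have "cmod (l2inner (a j) (b j) - l2inner x y) \<le> cmod (l2inner (A j) (B j))
         + cmod (l2inner (A j) y) + cmod (l2inner x (B j))"
      unfolding eq by (rule norm3)
    also have "\<dots> \<le> l2norm (A j) * l2norm (B j) + l2norm (A j) * l2norm y + l2norm x * l2norm (B j)"
      using cauchy_schwarz[OF A2 B2, of j j] cauchy_schwarz[OF A2 y, of j] cauchy_schwarz[OF x B2, of j]
      by linarith
    finally show ?thesis .
  qed
  have ax': "(\<lambda>j. l2norm (A j)) \<longlonglongrightarrow> 0" using ax unfolding A_def .
  have by2: "(\<lambda>j. l2norm (B j)) \<longlonglongrightarrow> 0" using by' unfolding B_def .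
  have "(\<lambda>j. l2norm (A j) * l2norm (B j) + l2norm (A j) * l2norm y + l2norm x * l2norm (B j))
         \<longlonglongrightarrow> 0 * 0 + 0 * l2norm y + l2norm x * 0"
    by (intro tendsto_add tendsto_mult ax' by2 tendsto_const)
  hence lim0: "(\<lambda>j. l2norm (A j) * l2norm (B j) + l2norm (A j) * l2norm y + l2norm x * l2norm (B j)) \<longlonglongrightarrow> 0"
    by simp
  have "(\<lambda>j. l2inner (a j) (b j) - l2inner x y) \<longlonglongrightarrow> 0"
    by (rule Lim_null_comparison[OF always_eventually lim0]) (use bnd in blast)
  thus ?thesis by (rule LIM_zero_cancel)
qed

lemma orth_min:
  assumes e: "e \<in> ell2" and q: "q \<in> ell2"
    and min: "\<And>s. n2 e \<le> n2 (\<lambda>n. e n + s * q n)"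
  shows "l2inner e q = 0"
proof (rule ccontr)
  define a where "a = l2inner e q"
  assume "l2inner e q \<noteq> 0"
  hence apos: "0 < cmod a" by (simp add: a_def)
  define r where "r = 1 / (n2 q + 1)"
  have nq: "0 \<le> n2 q" by (rule n2_nonneg[OF q])
  have rpos: "0 < r" using nq by (simp add: r_def)
  have rq: "r * n2 q < 1" using nq by (simp add: r_def field_simps)
  define s where "s = - complex_of_real r * cnj a"
  have sq: "(\<lambda>n. s * q n) \<in> ell2" by (rule ell2_scale[OF q])
  have cs: "cmod s = r * cmod a" using rpos by (simp add: s_def norm_mult)
  have n2s: "n2 (\<lambda>n. s * q n) = r\<^sup>2 * (cmod a)\<^sup>2 * n2 q"
    using n2_scale[OF q, of s] unfolding cs by (simp add: power_mult_distrib)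
  have ca: "cnj a * a = complex_of_real ((cmod a)\<^sup>2)" by (metis complex_norm_square mult.commute)
  have "l2inner e (\<lambda>n. s * q n) = s * a" using l2inner_scale_right[OF e q] a_def by simp
  also have "s * a = - complex_of_real r * (cnj a * a)" by (simp add: s_def mult.assoc)
  also have "\<dots> = - complex_of_real (r * (cmod a)\<^sup>2)" unfolding ca by simp
  finally have ip: "Re (l2inner e (\<lambda>n. s * q n)) = - (r * (cmod a)\<^sup>2)" by simp
  have "n2 (\<lambda>n. e n + s * q n) = n2 e + n2 (\<lambda>n. s * q n) + 2 * Re (l2inner e (\<lambda>n. s * q n))"
    by (rule n2_add[OF e sq])
  also have "\<dots> = n2 e + r * (cmod a)\<^sup>2 * (r * n2 q - 2)"
    unfolding n2s ip by (simp add: algebra_simps power2_eq_square)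
  finally have eqn: "n2 (\<lambda>n. e n + s * q n) = n2 e + r * (cmod a)\<^sup>2 * (r * n2 q - 2)" .
  have "r * (cmod a)\<^sup>2 * (r * n2 q - 2) < 0"
    using rpos apos rq by (intro mult_pos_neg) auto
  thus False using min[of s] eqn by simp
qed

lemma parallelogram:
  assumes "p \<in> ell2" "q \<in> ell2"
  shows "n2 (\<lambda>n. p n - q n) = 2 * n2 p + 2 * n2 q - n2 (\<lambda>n. p n + q n)"
  using n2_add[OF assms] n2_diff[OF assms] by simp

lemma inv_seq_tendsto: "(\<lambda>M. b / (real M + 1)) \<longlonglongrightarrow> 0"
proof -
  have "(\<lambda>M. b * inverse (real (Suc M))) \<longlonglongrightarrow> b * 0"
    by (intro tendsto_mult tendsto_const LIMSEQ_inverse_real_of_nat)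
  thus ?thesis by (simp add: divide_inverse add.commute)
qed



lemma ann_pow: "(ann ^^ l) x m = complex_of_real (sqrt (fact (m+l) / fact m)) * x (m+l)"
proof (induction l arbitrary: x)
  case 0
  then show ?case by simp
next
  case (Suc l)
  have "(ann ^^ Suc l) x m = (ann ^^ l) (ann x) m" by (simp add: funpow_Suc_right del: funpow.simps)
  also have "\<dots> = complex_of_real (sqrt (fact (m+l) / fact m)) * (ann x) (m+l)" by (rule Suc.IH)
  also have "\<dots> = complex_of_real (sqrt (fact (m+l) / fact m) * sqrt (real (m + l + 1))) * x (m + Suc l)"
    by (simp add: ann_def)
  also have "sqrt (fact (m+l) / fact m) * sqrt (real (m + l + 1)) = sqrt (fact (m + Suc l) / fact m)"
    by (simp add: real_sqrt_mult[symmetric] algebra_simps)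
  finally show ?case .
qed

lemma cre_pow: "(cre ^^ k) y n = (if k \<le> n then complex_of_real (sqrt (fact n / fact (n-k))) * y (n-k) else 0)"
proof (induction k arbitrary: n)
  case 0
  then show ?case by simp
next
  case (Suc k)
  show ?case
  proof (cases "Suc k \<le> n")
    case True
    then obtain m where n: "n = Suc m" and km: "k \<le> m" by (cases n) auto
    have "(cre ^^ Suc k) y n = complex_of_real (sqrt (real n)) * (cre ^^ k) y m"
      by (simp add: cre_def n)
    also have "\<dots> = complex_of_real (sqrt (real n) * sqrt (fact m / fact (m-k))) * y (m-k)"
      using Suc.IH[of m] km by simp
    also have "sqrt (real n) * sqrt (fact m / fact (m-k)) = sqrt (fact n / fact (n - Suc k))"
      by (simp add: n real_sqrt_mult[symmetric] algebra_simps)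
    finally show ?thesis using True n by simp
  next
    case False
    show ?thesis
    proof (cases n)
      case 0 then show ?thesis by (simp add: cre_def)
    next
      case (Suc m)
      then show ?thesis using False Suc.IH[of m] by (simp add: cre_def)
    qed
  qed
qed

definition cf :: "nat \<Rightarrow> nat \<Rightarrow> nat \<Rightarrow> real" where
  "cf k l m = (if l \<le> m then sqrt (fact m / fact (m-l) * (fact (m - l + k) / fact (m-l))) else 0)"

definition Jop :: "nat \<Rightarrow> (nat \<Rightarrow> real) \<Rightarrow> complex \<Rightarrow> (nat \<Rightarrow> real) \<Rightarrow> (nat \<Rightarrow> complex) \<Rightarrow> (nat \<Rightarrow> complex)" where
  "Jop d c \<xi> f x n = complex_of_real (f n) * x n
     + (if d \<le> n then \<xi> * complex_of_real (c (n-d)) * x (n-d) else 0)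
     + cnj \<xi> * complex_of_real (c n) * x (n+d)"

lemma A_op_Jop:
  assumes "l < k"
  shows "A_op k l \<xi> f = Jop (k-l) (cf k l) \<xi> f"
proof (rule ext)+
  fix x n
  have t1: "(cre ^^ k) ((ann ^^ l) x) n = (if k - l \<le> n then complex_of_real (cf k l (n-(k-l))) * x (n-(k-l)) else 0)"
  proof (cases "k \<le> n")
    case True
    have e1: "n - k + l = n - (k-l)" using True assms by simp
    have "(cre ^^ k) ((ann ^^ l) x) n = complex_of_real (sqrt (fact n / fact (n-k)) * sqrt (fact (n-k+l) / fact (n-k))) * x (n-k+l)"
      using True by (simp add: cre_pow ann_pow)
    also have "sqrt (fact n / fact (n-k)) * sqrt (fact (n-k+l) / fact (n-k)) = cf k l (n-(k-l))"
    proof -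
      have a: "l \<le> n - (k-l)" "n - (k-l) - l = n-k" "n - (k-l) - l + k = n" using True assms by auto
      have "cf k l (n-(k-l)) = sqrt (fact (n - (k-l)) / fact (n-k) * (fact n / fact (n-k)))"
        unfolding cf_def using a by simp
      also have "\<dots> = sqrt (fact (n-k+l) / fact (n-k)) * sqrt (fact n / fact (n-k))"
        using e1 by (simp only: real_sqrt_mult)
      finally show ?thesis by (simp only: mult.commute)
    qed
    finally show ?thesis using True assms e1 by simp
  next
    case False
    show ?thesis
    proof (cases "k - l \<le> n")
      case True
      have "\<not> l \<le> n - (k-l)" using False True assms by auto
      then show ?thesis using False by (simp add: cre_pow cf_def)
    next
      case False2: False
      then show ?thesis using False by (simp add: cre_pow)
    qed
  qed
  have t2: "(cre ^^ l) ((ann ^^ k) x) n = complex_of_real (cf k l n) * x (n+(k-l))"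
  proof (cases "l \<le> n")
    case True
    have e1: "n - l + k = n + (k-l)" using True assms by simp
    have "(cre ^^ l) ((ann ^^ k) x) n = complex_of_real (sqrt (fact n / fact (n-l))) * (complex_of_real (sqrt (fact (n-l+k) / fact (n-l))) * x (n-l+k))"
      by (simp only: cre_pow ann_pow if_P[OF True])
    also have "\<dots> = complex_of_real (sqrt (fact n / fact (n-l)) * sqrt (fact (n-l+k) / fact (n-l))) * x (n+(k-l))"
      by (simp only: e1 of_real_mult mult.assoc)
    also have "sqrt (fact n / fact (n-l)) * sqrt (fact (n-l+k) / fact (n-l)) = cf k l n"
      unfolding cf_def by (simp only: if_P[OF True] real_sqrt_mult)
    finally show ?thesis .
  next
    case False
    then show ?thesis by (simp add: cre_pow cf_def)
  qed
  show "A_op k l \<xi> f x n = Jop (k-l) (cf k l) \<xi> f x n"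
    unfolding A_op_def Jop_def numfun_def t1 t2 by (cases "k - l \<le> n") (simp_all add: mult.assoc)
qed

lemma cf_nonneg: "0 \<le> cf k l m"
  unfolding cf_def by simp

lemma fact_ratio_mono: "fact (j+p) / fact j \<le> (fact (Suc j + p) / fact (Suc j) :: real)"
proof -
  have eq: "fact (Suc j + p) / fact (Suc j) = (real (Suc (j + p)) / real (Suc j)) * (fact (j+p) / fact j :: real)"
    by (simp add: field_simps del: of_nat_Suc)
  have "1 \<le> real (Suc (j + p)) / real (Suc j)" by simp
  moreover have "0 \<le> fact (j+p) / (fact j :: real)" by simp
  ultimately have "1 * (fact (j+p) / fact j) \<le> (real (Suc (j + p)) / real (Suc j)) * (fact (j+p) / (fact j :: real))"
    by (rule mult_right_mono)
  thus ?thesis using eq by simp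
qed

lemma cf_Suc: "cf k l m \<le> cf k l (Suc m)"
proof (cases "l \<le> m")
  case True
  then obtain j where m: "m = l + j" using le_Suc_ex by blast
  have a: "fact (j+l) / fact j \<le> (fact (Suc j + l) / fact (Suc j) :: real)" by (rule fact_ratio_mono)
  have b: "fact (j+k) / fact j \<le> (fact (Suc j + k) / fact (Suc j) :: real)" by (rule fact_ratio_mono)
  have "fact (j+l) / fact j * (fact (j+k) / fact j) \<le> (fact (Suc j + l) / fact (Suc j)) * (fact (Suc j + k) / (fact (Suc j) :: real))"
    using a b by (intro mult_mono) auto
  hence "sqrt (fact (j+l) / fact j * (fact (j+k) / fact j)) \<le> sqrt ((fact (Suc j + l) / fact (Suc j)) * (fact (Suc j + k) / (fact (Suc j) :: real)))"
    by (rule real_sqrt_le_mono)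
  moreover have "cf k l m = sqrt (fact (j+l) / fact j * (fact (j+k) / fact j))"
    unfolding cf_def m by (simp add: add.commute)
  moreover have "cf k l (Suc m) = sqrt ((fact (Suc j + l) / fact (Suc j)) * (fact (Suc j + k) / (fact (Suc j) :: real)))"
    unfolding cf_def m by (simp add: add.commute)
  ultimately show ?thesis by simp
next
  case False
  then show ?thesis using cf_nonneg[of k l "Suc m"] by (simp add: cf_def)
qed

lemma cf_mono: "m \<le> m' \<Longrightarrow> cf k l m \<le> cf k l m'"
  using lift_Suc_mono_le[of "cf k l", OF cf_Suc] by blast

lemma rising_nonneg: "0 \<le> rising x s"
  unfolding rising_def by (auto intro: prod_nonneg)

lemma beta_nonneg: "0 \<le> beta k l z"
  unfolding beta_def using rising_nonneg by simp

lemma rising_fact: "real_of_int (rising (int a + 1) s) = fact (a + s) / fact a"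
proof (induction s)
  case 0
  then show ?case by (simp add: rising_def)
next
  case (Suc s)
  have "real_of_int (rising (int a + 1) (Suc s)) = real_of_int (rising (int a + 1) s) * real (a + 1 + s)"
    unfolding rising_def by simp
  also have "\<dots> = fact (a + s) / fact a * real (Suc (a + s))" using Suc.IH by simp
  also have "\<dots> = fact (a + Suc s) / fact a" by (simp add: field_simps)
  finally show ?case .
qed

lemma beta_cf: "beta k l (int n) = cf k l n"
proof (cases "l \<le> n")
  case True
  have e: "int n - int l + 1 = int (n-l) + 1" using True by simp
  have "beta k l (int n) = sqrt (real_of_int (rising (int (n-l) + 1) l) * real_of_int (rising (int (n-l) + 1) k))"
    unfolding beta_def e by simp
  also have "\<dots> = sqrt (fact (n - l + l) / fact (n-l) * (fact (n-l+k) / fact (n-l)))"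
    by (simp only: rising_fact)
  also have "\<dots> = cf k l n" unfolding cf_def using True by simp
  finally show ?thesis .
next
  case False
  have "rising (int n - int l + 1) l = 0"
  proof (cases "int n - int l + 1 < 0")
    case True
    then show ?thesis by (simp add: rising_def)
  next
    case False2: False
    hence e: "int n - int l + 1 = 0" using False by simp
    have "0 \<in> {..<l}" using False by simp
    hence "(\<Prod>i<l. (0::int) + int i) = 0" by (intro prod_zero) auto
    thus ?thesis unfolding rising_def e by simp
  qed
  then show ?thesis using False unfolding beta_def cf_def by simp
qed



lemma Jop_lin:
  "Jop d c \<xi> f (\<lambda>n. a * x n + b * y n) = (\<lambda>n. a * Jop d c \<xi> f x n + b * Jop d c \<xi> f y n)"
  by (rule ext) (simp add: Jop_def algebra_simps)

lemma D0_bound: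
  assumes "x \<in> D0"
  obtains S where "\<And>m. S \<le> m \<Longrightarrow> x m = 0"
proof -
  have "finite {n. x n \<noteq> 0}" using assms unfolding D0_def by simp
  then obtain S where "{n. x n \<noteq> 0} \<subseteq> {..<S}" using finite_nat_bounded by blast
  hence "\<And>m. S \<le> m \<Longrightarrow> x m = 0" by force
  thus ?thesis using that by blast
qed

lemma D0_iff_bound: "x \<in> D0 \<longleftrightarrow> (\<exists>S. \<forall>m\<ge>S. x m = 0)"
proof
  assume "x \<in> D0" thus "\<exists>S. \<forall>m\<ge>S. x m = 0" by (metis D0_bound)
next
  assume "\<exists>S. \<forall>m\<ge>S. x m = 0"
  then obtain S where "\<forall>m\<ge>S. x m = 0" by blast
  hence "{n. x n \<noteq> 0} \<subseteq> {..<S}" by (auto simp: not_less[symmetric])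
  thus "x \<in> D0" unfolding D0_def using finite_subset by blast
qed

lemma Jop_D0:
  assumes "x \<in> D0"
  shows "Jop d c \<xi> f x \<in> D0"
proof -
  obtain S where S: "\<And>m. S \<le> m \<Longrightarrow> x m = 0" using D0_bound[OF assms] by blast
  have "\<forall>m\<ge>S+d. Jop d c \<xi> f x m = 0"
    unfolding Jop_def using S by auto
  thus ?thesis using D0_iff_bound by blast
qed

lemma D0_lin: "x \<in> D0 \<Longrightarrow> y \<in> D0 \<Longrightarrow> (\<lambda>n. a * x n + b * y n) \<in> D0"
proof -
  assume "x \<in> D0" "y \<in> D0"
  then obtain S1 S2 where "\<And>m. S1 \<le> m \<Longrightarrow> x m = 0" "\<And>m. S2 \<le> m \<Longrightarrow> y m = 0"
    using D0_bound by metis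
  hence "\<forall>m\<ge>S1+S2. a * x m + b * y m = 0" by auto
  thus ?thesis using D0_iff_bound by blast
qed

lemma sum_shift_if:
  fixes a d :: nat
  shows "(\<Sum>n<a+d. (if d \<le> n then g (n-d) else 0)) = (\<Sum>m<a. g m)"
proof (induction a)
  case 0
  then show ?case by simp
next
  case (Suc a)
  then show ?case by (simp add: add.commute)
qed

lemma sum_extend_zero:
  fixes S d :: nat
  assumes "\<And>n. S \<le> n \<Longrightarrow> F n = 0"
  shows "(\<Sum>n<S+d. F n) = (\<Sum>n<S. F n)"
  using assms by (induction d) auto

lemma l2inner_finite:
  assumes "\<And>n. S \<le> n \<Longrightarrow> cnj (x n) * y n = 0"
  shows "l2inner x y = (\<Sum>n<S. cnj (x n) * y n)"
  unfolding l2inner_def by (rule suminf_finite) (use assms in auto)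

lemma Jop_pair:
  assumes y: "y \<in> D0"
  shows "l2inner e (Jop d c \<xi> f y) = l2inner (Jop d c \<xi> f e) y"
proof -
  obtain S where S: "\<And>m. S \<le> m \<Longrightarrow> y m = 0" using D0_bound[OF y] by blast
  define R where "R = S + d"
  have JyR: "\<And>n. R \<le> n \<Longrightarrow> Jop d c \<xi> f y n = 0" unfolding Jop_def R_def using S by auto
  have L: "l2inner e (Jop d c \<xi> f y) = (\<Sum>n<R. cnj (e n) * Jop d c \<xi> f y n)"
    by (rule l2inner_finite) (simp add: JyR)
  have Rr: "l2inner (Jop d c \<xi> f e) y = (\<Sum>n<R. cnj (Jop d c \<xi> f e n) * y n)"
    by (rule l2inner_finite) (simp add: R_def S)
  define G where "G m = cnj (e (m+d)) * \<xi> * complex_of_real (c m) * y m" for m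
  define H where "H m = cnj (e m) * cnj \<xi> * complex_of_real (c m) * y (m+d)" for m
  have "(\<Sum>n<R. cnj (e n) * Jop d c \<xi> f y n)
      = (\<Sum>n<R. cnj (e n) * complex_of_real (f n) * y n) + (\<Sum>n<R. (if d \<le> n then G (n-d) else 0))
        + (\<Sum>n<R. H n)"
  proof -
    have "cnj (e n) * Jop d c \<xi> f y n = cnj (e n) * complex_of_real (f n) * y n + (if d \<le> n then G (n-d) else 0) + H n" for n
      by (cases "d \<le> n") (simp_all add: Jop_def G_def H_def algebra_simps)
    thus ?thesis by (simp add: sum.distrib)
  qed
  also have "(\<Sum>n<R. (if d \<le> n then G (n-d) else 0)) = (\<Sum>m<S. G m)"
    unfolding R_def by (rule sum_shift_if)
  also have "(\<Sum>n<R. H n) = (\<Sum>n<S. H n)"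
    unfolding R_def by (rule sum_extend_zero) (simp add: H_def S)
  finally have L2: "l2inner e (Jop d c \<xi> f y) = (\<Sum>n<R. cnj (e n) * complex_of_real (f n) * y n) + (\<Sum>m<S. G m) + (\<Sum>n<S. H n)"
    using L by simp
  have "(\<Sum>n<R. cnj (Jop d c \<xi> f e n) * y n)
      = (\<Sum>n<R. cnj (e n) * complex_of_real (f n) * y n) + (\<Sum>n<R. (if d \<le> n then H (n-d) else 0))
        + (\<Sum>n<R. G n)"
  proof -
    have "cnj (Jop d c \<xi> f e n) * y n = cnj (e n) * complex_of_real (f n) * y n + (if d \<le> n then H (n-d) else 0) + G n" for n
      by (cases "d \<le> n") (simp_all add: Jop_def G_def H_def algebra_simps)
    thus ?thesis by (simp add: sum.distrib)
  qed
  also have "(\<Sum>n<R. (if d \<le> n then H (n-d) else 0)) = (\<Sum>m<S. H m)"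
    unfolding R_def by (rule sum_shift_if)
  also have "(\<Sum>n<R. G n) = (\<Sum>n<S. G n)"
    unfolding R_def by (rule sum_extend_zero) (simp add: G_def S)
  finally have R2: "l2inner (Jop d c \<xi> f e) y = (\<Sum>n<R. cnj (e n) * complex_of_real (f n) * y n) + (\<Sum>m<S. H m) + (\<Sum>n<S. G n)"
    using Rr by simp
  show ?thesis using L2 R2 by simp
qed

definition dlt :: "nat \<Rightarrow> nat \<Rightarrow> complex" where
  "dlt m = (\<lambda>n. if n = m then 1 else 0)"

lemma dlt_D0: "dlt m \<in> D0"
  unfolding D0_iff_bound dlt_def by (rule exI[of _ "Suc m"]) auto

lemma l2inner_dlt: "l2inner w (dlt m) = cnj (w m)"
proof -
  have "(\<lambda>n. cnj (w n) * dlt m n) = (\<lambda>n. if n = m then cnj (w n) else 0)"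
    by (auto simp: dlt_def)
  moreover have "(\<lambda>n. if n = m then cnj (w n) else 0) sums cnj (w m)" by (rule sums_single)
  ultimately show ?thesis unfolding l2inner_def by (simp add: sums_iff)
qed

lemma attains_max:
  fixes g :: "nat \<Rightarrow> real"
  assumes lim: "g \<longlonglongrightarrow> 0" and pos: "0 < g m0"
  shows "\<exists>n. \<forall>m. g m \<le> g n"
proof -
  have "eventually (\<lambda>m. g m < g m0) sequentially" using order_tendstoD(2)[OF lim pos] .
  then obtain M where M: "\<And>m. M \<le> m \<Longrightarrow> g m < g m0" unfolding eventually_sequentially by blast
  have m0M: "m0 \<le> M" using M[of m0] by (cases "M \<le> m0") auto
  define X where "X = g ` {..M}"
  have fin: "finite X" "X \<noteq> {}" unfolding X_def by auto
  have "Max X \<in> X" by (rule Max_in[OF fin])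
  then obtain n where n0: "Max X = g n" "n \<in> {..M}" unfolding X_def by (rule imageE)
  hence n: "n \<le> M" "g n = Max X" by auto
  have "g m \<le> g n" for m
  proof (cases "m \<le> M")
    case True
    then show ?thesis using Max_ge[OF fin(1), of "g m"] n unfolding X_def by auto
  next
    case False
    hence "g m < g m0" using M by simp
    also have "g m0 \<le> g n" using Max_ge[OF fin(1), of "g m0"] n m0M unfolding X_def by auto
    finally show ?thesis by simp
  qed
  thus ?thesis by blast
qed

lemma ell2_tendsto_zero:
  assumes "e \<in> ell2"
  shows "(\<lambda>n. cmod (e n)) \<longlonglongrightarrow> 0"
proof -
  have "(\<lambda>n. (cmod (e n))\<^sup>2) \<longlonglongrightarrow> 0" using assms ell2_iff summable_LIMSEQ_zero by blast
  hence "(\<lambda>n. sqrt ((cmod (e n))\<^sup>2)) \<longlonglongrightarrow> sqrt 0" by (intro tendsto_intros)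
  thus ?thesis by simp
qed

lemma max_principle:
  assumes e: "e \<in> ell2" and eq: "\<And>n. Jop d c \<xi> f e n = \<mu> * e n"
    and H: "\<And>n. cmod \<xi> * ((if d \<le> n then c (n-d) else 0) + c n) < cmod (complex_of_real (f n) - \<mu>)"
    and c0: "\<And>n. 0 \<le> c n"
  shows "e = (\<lambda>n. 0)"
proof (rule ccontr)
  assume "e \<noteq> (\<lambda>n. 0)"
  then obtain m0 where m0: "e m0 \<noteq> 0" by auto
  define g where "g = (\<lambda>n. cmod (e n))"
  have "\<exists>n. \<forall>m. g m \<le> g n"
    by (rule attains_max[of g m0]) (use ell2_tendsto_zero[OF e] m0 in \<open>auto simp: g_def\<close>)
  then obtain n where n: "\<And>m. g m \<le> g n" by blast
  have gpos: "0 < g n" using n[of m0] m0 by (simp add: g_def) (smt (verit) norm_ge_zero zero_less_norm_iff)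
  define P where "P = (if d \<le> n then \<xi> * complex_of_real (c (n-d)) * e (n-d) else 0)"
  define Q where "Q = cnj \<xi> * complex_of_real (c n) * e (n+d)"
  have "complex_of_real (f n) * e n + P + Q = \<mu> * e n" using eq[of n] unfolding Jop_def P_def Q_def .
  hence "(complex_of_real (f n) - \<mu>) * e n = - (P + Q)" by (simp add: algebra_simps)
  hence "cmod (complex_of_real (f n) - \<mu>) * g n = cmod (P + Q)" by (metis g_def norm_minus_cancel norm_mult)
  also have "\<dots> \<le> cmod P + cmod Q" by (rule norm_triangle_ineq)
  also have "cmod P \<le> cmod \<xi> * (if d \<le> n then c (n-d) else 0) * g n"
  proof (cases "d \<le> n")
    case True
    have "cmod P = cmod \<xi> * c (n-d) * g (n-d)" using True c0 by (simp add: P_def g_def norm_mult)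
    also have "\<dots> \<le> cmod \<xi> * c (n-d) * g n" using n[of "n-d"] c0 by (simp add: mult_left_mono)
    finally show ?thesis using True by simp
  qed (simp add: P_def)
  also have "cmod Q \<le> cmod \<xi> * c n * g n"
  proof -
    have "cmod Q = cmod \<xi> * c n * g (n+d)" using c0 by (simp add: Q_def g_def norm_mult)
    also have "\<dots> \<le> cmod \<xi> * c n * g n" using n[of "n+d"] c0 by (simp add: mult_left_mono)
    finally show ?thesis .
  qed
  finally have "cmod (complex_of_real (f n) - \<mu>) * g n \<le> cmod \<xi> * ((if d \<le> n then c (n-d) else 0) + c n) * g n"
    by (simp add: algebra_simps)
  moreover have "cmod \<xi> * ((if d \<le> n then c (n-d) else 0) + c n) * g n < cmod (complex_of_real (f n) - \<mu>) * g n"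
    using H[of n] gpos by (rule mult_strict_right_mono)
  ultimately show False by simp
qed



lemma cmod_f_it: "cmod (complex_of_real a - \<i> * complex_of_real t) = sqrt (a\<^sup>2 + t\<^sup>2)"
proof -
  have "complex_of_real a - \<i> * complex_of_real t = Complex a (-t)" by (simp add: complex_eq_iff)
  thus ?thesis by (simp add: complex_norm)
qed

lemma cmod_f_mit: "cmod (complex_of_real a - - (\<i> * complex_of_real t)) = sqrt (a\<^sup>2 + t\<^sup>2)"
proof -
  have "complex_of_real a - - (\<i> * complex_of_real t) = Complex a t" by (simp add: complex_eq_iff)
  thus ?thesis by (simp add: complex_norm)
qed

context
  fixes d :: nat and c :: "nat \<Rightarrow> real" and \<xi> :: complex and f :: "nat \<Rightarrow> real" and t :: real
  assumes c0: "\<And>n. 0 \<le> c n" and tpos: "0 < t"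
    and H: "\<And>n. cmod \<xi> * ((if d \<le> n then c (n-d) else 0) + c n) < sqrt ((f n)\<^sup>2 + t\<^sup>2)"
begin

lemma maxp:
  assumes "e \<in> ell2" "\<And>n. Jop d c \<xi> f e n = \<mu> * e n"
    and "\<mu> = \<i> * complex_of_real t \<or> \<mu> = - (\<i> * complex_of_real t)"
  shows "e = (\<lambda>n. 0)"
proof (rule max_principle[OF assms(1,2) _ c0])
  fix n
  have "cmod (complex_of_real (f n) - \<mu>) = sqrt ((f n)\<^sup>2 + t\<^sup>2)"
    using assms(3) cmod_f_it cmod_f_mit by auto
  thus "cmod \<xi> * ((if d \<le> n then c (n-d) else 0) + c n) < cmod (complex_of_real (f n) - \<mu>)"
    using H[of n] by simp
qed

lemma JD0_ell2: "x \<in> D0 \<Longrightarrow> Jop d c \<xi> f x \<in> ell2"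
  using Jop_D0 D0_ell2 by blast

lemma sym_D0: "x \<in> D0 \<Longrightarrow> y \<in> D0 \<Longrightarrow> l2inner x (Jop d c \<xi> f y) = l2inner (Jop d c \<xi> f x) y"
  by (rule Jop_pair)

lemma real_form:
  assumes x: "x \<in> D0"
  shows "Im (l2inner x (Jop d c \<xi> f x)) = 0"
proof -
  have "l2inner x (Jop d c \<xi> f x) = l2inner (Jop d c \<xi> f x) x" by (rule sym_D0[OF x x])
  also have "\<dots> = cnj (l2inner x (Jop d c \<xi> f x))"
    by (rule l2inner_cnj[OF D0_ell2[OF x] JD0_ell2[OF x]])
  finally have "l2inner x (Jop d c \<xi> f x) = cnj (l2inner x (Jop d c \<xi> f x))" .
  thus ?thesis by (metis Reals_cnj_iff complex_is_Real_iff)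
qed

lemma est:
  assumes x: "x \<in> D0"
  shows "n2 (\<lambda>n. Jop d c \<xi> f x n - \<i> * complex_of_real t * x n) = n2 (Jop d c \<xi> f x) + t\<^sup>2 * n2 x"
proof -
  have x2: "x \<in> ell2" by (rule D0_ell2[OF x])
  have Ax: "Jop d c \<xi> f x \<in> ell2" by (rule JD0_ell2[OF x])
  have sx: "(\<lambda>n. \<i> * complex_of_real t * x n) \<in> ell2" by (rule ell2_scale[OF x2])
  have "n2 (\<lambda>n. Jop d c \<xi> f x n - \<i> * complex_of_real t * x n)
     = n2 (Jop d c \<xi> f x) + n2 (\<lambda>n. \<i> * complex_of_real t * x n) - 2 * Re (l2inner (Jop d c \<xi> f x) (\<lambda>n. \<i> * complex_of_real t * x n))"
    by (rule n2_diff[OF Ax sx])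
  also have "n2 (\<lambda>n. \<i> * complex_of_real t * x n) = t\<^sup>2 * n2 x"
    using n2_scale[OF x2, of "\<i> * complex_of_real t"] by (simp add: norm_mult)
  also have "Re (l2inner (Jop d c \<xi> f x) (\<lambda>n. \<i> * complex_of_real t * x n)) = 0"
  proof -
    have "l2inner (Jop d c \<xi> f x) (\<lambda>n. \<i> * complex_of_real t * x n) = \<i> * complex_of_real t * l2inner (Jop d c \<xi> f x) x"
      by (rule l2inner_scale_right[OF Ax x2])
    also have "l2inner (Jop d c \<xi> f x) x = l2inner x (Jop d c \<xi> f x)" by (rule sym_D0[OF x x, symmetric])
    finally show ?thesis using real_form[OF x] by simp
  qed
  finally show ?thesis by simp
qed

lemma T_ell2:
  assumes "(x, y) \<in> graph_closure (graph_D0 (Jop d c \<xi> f))"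
  shows "x \<in> ell2" "y \<in> ell2"
  using assms unfolding graph_closure_def by auto

lemma T_seq:
  assumes "(x, y) \<in> graph_closure (graph_D0 (Jop d c \<xi> f))"
  obtains a where "\<And>j. a j \<in> D0" "(\<lambda>j. l2norm (\<lambda>n. a j n - x n)) \<longlonglongrightarrow> 0"
    "(\<lambda>j. l2norm (\<lambda>n. Jop d c \<xi> f (a j) n - y n)) \<longlonglongrightarrow> 0"
proof -
  obtain s where s: "\<And>j. s j \<in> graph_D0 (Jop d c \<xi> f)"
    "(\<lambda>j. l2norm (\<lambda>n. fst (s j) n - x n)) \<longlonglongrightarrow> 0"
    "(\<lambda>j. l2norm (\<lambda>n. snd (s j) n - y n)) \<longlonglongrightarrow> 0"
    using assms unfolding graph_closure_def by auto
  have "fst (s j) \<in> D0 \<and> snd (s j) = Jop d c \<xi> f (fst (s j))" for j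
  proof -
    obtain u where "s j = (u, Jop d c \<xi> f u)" "u \<in> D0" using s(1)[of j] unfolding graph_D0_def by blast
    thus ?thesis by simp
  qed
  thus ?thesis using that[of "\<lambda>j. fst (s j)"] s(2,3) by simp
qed

lemma T_intro:
  assumes "\<And>j. a j \<in> D0" "x \<in> ell2" "y \<in> ell2"
    "(\<lambda>j. l2norm (\<lambda>n. a j n - x n)) \<longlonglongrightarrow> 0"
    "(\<lambda>j. l2norm (\<lambda>n. Jop d c \<xi> f (a j) n - y n)) \<longlonglongrightarrow> 0"
  shows "(x, y) \<in> graph_closure (graph_D0 (Jop d c \<xi> f))"
  unfolding graph_closure_def
proof (clarify, intro conjI exI[of _ "\<lambda>j. (a j, Jop d c \<xi> f (a j))"] assms(2,3))
  show "\<forall>j. (a j, Jop d c \<xi> f (a j)) \<in> graph_D0 (Jop d c \<xi> f)"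
    using assms(1) unfolding graph_D0_def by auto
qed (use assms(4,5) in auto)

lemma l2norm_zero: "l2norm (\<lambda>n. 0) = 0"
  by (simp add: l2norm_def)

lemma G_T: "x \<in> D0 \<Longrightarrow> (x, Jop d c \<xi> f x) \<in> graph_closure (graph_D0 (Jop d c \<xi> f))"
  by (rule T_intro[of "\<lambda>j. x"]) (auto simp: D0_ell2 JD0_ell2 l2norm_zero)

lemma T_sym:
  assumes "(x, y) \<in> graph_closure (graph_D0 (Jop d c \<xi> f))"
    and "(x', y') \<in> graph_closure (graph_D0 (Jop d c \<xi> f))"
  shows "l2inner x y' = l2inner y x'"
proof -
  obtain a where a: "\<And>j. a j \<in> D0" "(\<lambda>j. l2norm (\<lambda>n. a j n - x n)) \<longlonglongrightarrow> 0"
    "(\<lambda>j. l2norm (\<lambda>n. Jop d c \<xi> f (a j) n - y n)) \<longlonglongrightarrow> 0" using T_seq[OF assms(1)] by blast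
  obtain b where b: "\<And>j. b j \<in> D0" "(\<lambda>j. l2norm (\<lambda>n. b j n - x' n)) \<longlonglongrightarrow> 0"
    "(\<lambda>j. l2norm (\<lambda>n. Jop d c \<xi> f (b j) n - y' n)) \<longlonglongrightarrow> 0" using T_seq[OF assms(2)] by blast
  have l1: "(\<lambda>j. l2inner (a j) (Jop d c \<xi> f (b j))) \<longlonglongrightarrow> l2inner x y'"
    by (rule inner_tendsto[OF _ _ T_ell2(1)[OF assms(1)] T_ell2(2)[OF assms(2)] a(2) b(3)])
       (use a(1) b(1) D0_ell2 JD0_ell2 in auto)
  have l2: "(\<lambda>j. l2inner (Jop d c \<xi> f (a j)) (b j)) \<longlonglongrightarrow> l2inner y x'"
    by (rule inner_tendsto[OF _ _ T_ell2(2)[OF assms(1)] T_ell2(1)[OF assms(2)] a(3) b(2)])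
       (use a(1) b(1) D0_ell2 JD0_ell2 in auto)
  have "(\<lambda>j. l2inner (a j) (Jop d c \<xi> f (b j))) = (\<lambda>j. l2inner (Jop d c \<xi> f (a j)) (b j))"
    using sym_D0 a(1) b(1) by auto
  with l1 l2 show ?thesis using LIMSEQ_unique by metis
qed

lemma L_lin:
  "(\<lambda>n. Jop d c \<xi> f (\<lambda>m. a * x m + b * y m) n - l * (a * x n + b * y n))
   = (\<lambda>n. a * (Jop d c \<xi> f x n - l * x n) + b * (Jop d c \<xi> f y n - l * y n))"
  unfolding Jop_lin by (rule ext) (simp add: algebra_simps)

lemma L_ell2: "x \<in> D0 \<Longrightarrow> (\<lambda>n. Jop d c \<xi> f x n - l * x n) \<in> ell2"
  by (rule ell2_diff[OF JD0_ell2 ell2_scale[OF D0_ell2]])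

lemma zero_D0: "(\<lambda>n. 0) \<in> D0"
  unfolding D0_def by simp

lemma surj:
  assumes z: "z \<in> ell2"
  shows "\<exists>w Y. (w, Y) \<in> graph_closure (graph_D0 (Jop d c \<xi> f)) \<and> (\<lambda>n. Y n - \<i> * complex_of_real t * w n) = z"
proof -
  define l where "l = \<i> * complex_of_real t"
  define J where "J = Jop d c \<xi> f"
  define L where "L x = (\<lambda>n. J x n - l * x n)" for x
  define V where "V x = n2 (\<lambda>n. L x n - z n)" for x
  define D where "D = Inf (V ` D0)"
  have JD0: "x \<in> D0 \<Longrightarrow> J x \<in> ell2" for x unfolding J_def by (rule JD0_ell2)
  have Lell2: "x \<in> D0 \<Longrightarrow> L x \<in> ell2" for x unfolding L_def J_def by (rule L_ell2)
  have Lz: "x \<in> D0 \<Longrightarrow> (\<lambda>n. L x n - z n) \<in> ell2" for x by (rule ell2_diff[OF Lell2 z])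
  have Vnn: "x \<in> D0 \<Longrightarrow> 0 \<le> V x" for x unfolding V_def by (rule n2_nonneg[OF Lz])
  have bdd: "bdd_below (V ` D0)" using Vnn by (auto intro!: bdd_belowI[of _ 0])
  have ne: "V ` D0 \<noteq> {}" using zero_D0 by blast
  have Dle: "D \<le> V x" if "x \<in> D0" for x unfolding D_def using bdd that by (auto intro: cInf_lower)
  have "\<exists>x. x \<in> D0 \<and> V x < D + 1 / (real j + 1)" for j
  proof -
    have "Inf (V ` D0) < D + 1 / (real j + 1)" unfolding D_def by (simp add: add_pos_nonneg)
    thus ?thesis using cInf_less_iff[OF ne bdd] by auto
  qed
  then obtain xs where xs: "\<And>j. xs j \<in> D0" "\<And>j. V (xs j) < D + 1 / (real j + 1)" by metis
  have Llin: "L (\<lambda>m. a * x m + b * y m) = (\<lambda>n. a * L x n + b * L y n)" for a b x y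
    unfolding L_def J_def by (rule L_lin)
  have Jlin: "J (\<lambda>m. a * x m + b * y m) = (\<lambda>n. a * J x n + b * J y n)" for a b x y
    unfolding J_def by (rule Jop_lin)
  have par: "n2 (\<lambda>n. L (xs i) n - L (xs j) n) \<le> 2 / (real i + 1) + 2 / (real j + 1)" for i j
  proof -
    define p where "p = (\<lambda>n. L (xs i) n - z n)"
    define q where "q = (\<lambda>n. L (xs j) n - z n)"
    define m where "m = (\<lambda>k. (1/2) * xs i k + (1/2) * xs j k)"
    have p2: "p \<in> ell2" "q \<in> ell2" unfolding p_def q_def using Lz xs(1) by auto
    have mD: "m \<in> D0" unfolding m_def by (rule D0_lin[OF xs(1) xs(1)])
    have "(\<lambda>n. p n + q n) = (\<lambda>n. 2 * (L m n - z n))"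
      unfolding p_def q_def m_def Llin by (rule ext) (simp add: algebra_simps)
    hence "n2 (\<lambda>n. p n + q n) = 4 * V m" unfolding V_def using n2_scale[OF Lz[OF mD], of 2] by simp
    moreover have "(\<lambda>n. p n - q n) = (\<lambda>n. L (xs i) n - L (xs j) n)" unfolding p_def q_def by simp
    moreover have "n2 p = V (xs i)" "n2 q = V (xs j)" unfolding p_def q_def V_def by simp_all
    ultimately have "n2 (\<lambda>n. L (xs i) n - L (xs j) n) = 2 * V (xs i) + 2 * V (xs j) - 4 * V m"
      using parallelogram[OF p2] by simp
    thus ?thesis using xs(2)[of i] xs(2)[of j] Dle[OF mD] by linarith
  qed
  define dx where "dx i j = (\<lambda>k. 1 * xs i k + (-1) * xs j k)" for i j
  have dxD: "dx i j \<in> D0" for i j unfolding dx_def by (rule D0_lin[OF xs(1) xs(1)])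
  have dxe: "dx i j = (\<lambda>k. xs i k - xs j k)" for i j unfolding dx_def by simp
  have Ldx: "L (dx i j) = (\<lambda>n. L (xs i) n - L (xs j) n)" for i j unfolding dx_def Llin by simp
  have Jdx: "J (dx i j) = (\<lambda>n. J (xs i) n - J (xs j) n)" for i j unfolding dx_def Jlin by simp
  have estL: "n2 (L x) = n2 (J x) + t\<^sup>2 * n2 x" if "x \<in> D0" for x
    unfolding L_def J_def l_def using est[OF that] .
  have cx: "t\<^sup>2 * n2 (\<lambda>k. xs i k - xs j k) \<le> 2 / (real i + 1) + 2 / (real j + 1)"
    and cJ: "n2 (\<lambda>k. J (xs i) k - J (xs j) k) \<le> 2 / (real i + 1) + 2 / (real j + 1)" for i j
  proof -
    have a: "0 \<le> n2 (\<lambda>n. J (xs i) n - J (xs j) n)" using n2_nonneg[OF JD0[OF dxD[of i j]]] unfolding Jdx .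
    have b: "0 \<le> t\<^sup>2 * n2 (\<lambda>k. xs i k - xs j k)" using n2_nonneg[OF D0_ell2[OF dxD[of i j]]] unfolding dxe by simp
    have "n2 (L (dx i j)) = n2 (J (dx i j)) + t\<^sup>2 * n2 (dx i j)" by (rule estL[OF dxD])
    hence E: "n2 (\<lambda>n. L (xs i) n - L (xs j) n) = n2 (\<lambda>n. J (xs i) n - J (xs j) n) + t\<^sup>2 * n2 (\<lambda>k. xs i k - xs j k)"
      unfolding Ldx Jdx by (simp add: dxe)
    show "t\<^sup>2 * n2 (\<lambda>k. xs i k - xs j k) \<le> 2 / (real i + 1) + 2 / (real j + 1)"
      "n2 (\<lambda>k. J (xs i) k - J (xs j) k) \<le> 2 / (real i + 1) + 2 / (real j + 1)"
      using a b par[of i j] E by linarith+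
  qed
  have cauchy: "\<exists>M. \<forall>i\<ge>M. \<forall>j\<ge>M. n2 (\<lambda>k. xs i k - xs j k) < e \<and> n2 (\<lambda>k. J (xs i) k - J (xs j) k) < e"
    if e: "e > 0" for e
  proof -
    have mpos: "0 < e * min (t\<^sup>2) 1" using e tpos by simp
    have "eventually (\<lambda>M. 4 / (real M + 1) < e * min (t\<^sup>2) 1) sequentially"
      using order_tendstoD(2)[OF inv_seq_tendsto[of 4] mpos] .
    then obtain M where M: "\<And>i. M \<le> i \<Longrightarrow> 4 / (real i + 1) < e * min (t\<^sup>2) 1"
      unfolding eventually_sequentially by blast
    show ?thesis
    proof (intro exI allI impI conjI)
      fix i j assume ij: "M \<le> i" "M \<le> j"
      have "2 / (real i + 1) \<le> 2 / (real M + 1)" by (rule divide_left_mono) (use ij in auto)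
      moreover have "2 / (real j + 1) \<le> 2 / (real M + 1)" by (rule divide_left_mono) (use ij in auto)
      ultimately have b: "2 / (real i + 1) + 2 / (real j + 1) < e * min (t\<^sup>2) 1" using M[of M] by simp
      have m1: "e * min (t\<^sup>2) 1 \<le> e * t\<^sup>2" "e * min (t\<^sup>2) 1 \<le> e" using e by (simp_all add: mult_left_mono)
      have "t\<^sup>2 * n2 (\<lambda>k. xs i k - xs j k) < t\<^sup>2 * e" using cx[of i j] b m1 by (simp add: mult.commute)
      thus "n2 (\<lambda>k. xs i k - xs j k) < e" using tpos by simp
      show "n2 (\<lambda>k. J (xs i) k - J (xs j) k) < e" using cJ[of i j] b m1 by linarith
    qed
  qed
  have c1: "\<And>e. e > 0 \<Longrightarrow> \<exists>M. \<forall>i\<ge>M. \<forall>j\<ge>M. n2 (\<lambda>k. xs i k - xs j k) < e"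
    using cauchy by meson
  have c2: "\<And>e. e > 0 \<Longrightarrow> \<exists>M. \<forall>i\<ge>M. \<forall>j\<ge>M. n2 (\<lambda>k. J (xs i) k - J (xs j) k) < e"
    using cauchy by meson
  obtain w where w: "w \<in> ell2" "(\<lambda>j. n2 (\<lambda>n. xs j n - w n)) \<longlonglongrightarrow> 0"
    using ell2_complete[OF D0_ell2[OF xs(1)] c1] by blast
  obtain Y where Y: "Y \<in> ell2" "(\<lambda>j. n2 (\<lambda>n. J (xs j) n - Y n)) \<longlonglongrightarrow> 0"
    using ell2_complete[OF JD0[OF xs(1)] c2] by blast
  have wl: "(\<lambda>j. l2norm (\<lambda>n. xs j n - w n)) \<longlonglongrightarrow> 0"
    using n2_tendsto_iff[of "\<lambda>j n. xs j n - w n"] w ell2_diff[OF D0_ell2[OF xs(1)] w(1)] by blast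
  have Yl: "(\<lambda>j. l2norm (\<lambda>n. J (xs j) n - Y n)) \<longlonglongrightarrow> 0"
    using n2_tendsto_iff[of "\<lambda>j n. J (xs j) n - Y n"] Y ell2_diff[OF JD0[OF xs(1)] Y(1)] by blast
  have wY: "(w, Y) \<in> graph_closure (graph_D0 (Jop d c \<xi> f))"
    by (rule T_intro[OF xs(1) w(1) Y(1) wl]) (use Yl J_def in simp)
  define p where "p = (\<lambda>n. Y n - l * w n)"
  have p2: "p \<in> ell2" unfolding p_def by (rule ell2_diff[OF Y(1) ell2_scale[OF w(1)]])
  have cl: "cmod l = t" using tpos by (simp add: l_def norm_mult)
  have pl: "(\<lambda>j. l2norm (\<lambda>n. L (xs j) n - p n)) \<longlonglongrightarrow> 0"
  proof -
    have bnd: "l2norm (\<lambda>n. L (xs j) n - p n) \<le> l2norm (\<lambda>n. J (xs j) n - Y n) + t * l2norm (\<lambda>n. xs j n - w n)" for j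
    proof -
      have A2: "(\<lambda>n. J (xs j) n - Y n) \<in> ell2" by (rule ell2_diff[OF JD0[OF xs(1)] Y(1)])
      have W2: "(\<lambda>n. xs j n - w n) \<in> ell2" by (rule ell2_diff[OF D0_ell2[OF xs(1)] w(1)])
      have B2: "(\<lambda>n. l * (xs j n - w n)) \<in> ell2" by (rule ell2_scale[OF W2])
      have "(\<lambda>n. L (xs j) n - p n) = (\<lambda>n. (J (xs j) n - Y n) - l * (xs j n - w n))"
        unfolding L_def p_def by (rule ext) (simp add: algebra_simps)
      hence "l2norm (\<lambda>n. L (xs j) n - p n) \<le> l2norm (\<lambda>n. J (xs j) n - Y n) + l2norm (\<lambda>n. l * (xs j n - w n))"
        using l2norm_triangle_diff[OF A2 B2] by simp
      also have "l2norm (\<lambda>n. l * (xs j n - w n)) = t * l2norm (\<lambda>n. xs j n - w n)"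
        using l2norm_scale[OF W2, of l] cl by simp
      finally show ?thesis .
    qed
    have lim: "(\<lambda>j. l2norm (\<lambda>n. J (xs j) n - Y n) + t * l2norm (\<lambda>n. xs j n - w n)) \<longlonglongrightarrow> 0 + t * 0"
      by (intro tendsto_add tendsto_mult tendsto_const Yl wl)
    show ?thesis
      by (rule Lim_null_comparison[OF always_eventually]) (use bnd lim l2norm_nonneg ell2_diff[OF Lell2[OF xs(1)] p2] in auto)
  qed
  have upper: "n2 (\<lambda>n. p n - z n) \<le> D"
  proof -
    have "(\<lambda>j. n2 (\<lambda>n. L (xs j) n - z n)) \<longlonglongrightarrow> n2 (\<lambda>n. p n - z n)"
      by (rule n2_tendsto[OF Lz[OF xs(1)] ell2_diff[OF p2 z]]) (use pl in simp)
    moreover have "(\<lambda>j. D + 1 / (real j + 1)) \<longlonglongrightarrow> D"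
      using tendsto_add[OF tendsto_const inv_seq_tendsto[of 1], of D] by simp
    moreover have "\<forall>j\<ge>0. n2 (\<lambda>n. L (xs j) n - z n) \<le> D + 1 / (real j + 1)"
      using xs(2) unfolding V_def by (simp add: less_imp_le)
    ultimately show ?thesis using LIMSEQ_le by blast
  qed
  have lower: "D \<le> n2 (\<lambda>n. p n + s * L x n - z n)" if x: "x \<in> D0" for x s
  proof -
    have xs': "(\<lambda>k. 1 * xs j k + s * x k) \<in> D0" for j by (rule D0_lin[OF xs(1) x])
    have Lx2: "(\<lambda>n. s * L x n) \<in> ell2" by (rule ell2_scale[OF Lell2[OF x]])
    have a2: "(\<lambda>n. L (xs j) n + s * L x n - z n) \<in> ell2" for j
      by (rule ell2_diff[OF ell2_add[OF Lell2[OF xs(1)] Lx2] z])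
    have b2: "(\<lambda>n. p n + s * L x n - z n) \<in> ell2" by (rule ell2_diff[OF ell2_add[OF p2 Lx2] z])
    have "(\<lambda>j. n2 (\<lambda>n. L (xs j) n + s * L x n - z n)) \<longlonglongrightarrow> n2 (\<lambda>n. p n + s * L x n - z n)"
      by (rule n2_tendsto[OF a2 b2]) (use pl in simp)
    moreover have "D \<le> n2 (\<lambda>n. L (xs j) n + s * L x n - z n)" for j
      using Dle[OF xs'[of j]] unfolding V_def Llin by simp
    ultimately show ?thesis by (intro LIMSEQ_le_const) auto
  qed
  define e where "e = (\<lambda>n. p n - z n)"
  have e2: "e \<in> ell2" unfolding e_def by (rule ell2_diff[OF p2 z])
  have orth: "l2inner e (L (dlt m)) = 0" for m
  proof (rule orth_min[OF e2 Lell2[OF dlt_D0]])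
    fix s
    have "(\<lambda>n. e n + s * L (dlt m) n) = (\<lambda>n. p n + s * L (dlt m) n - z n)"
      unfolding e_def by (rule ext) simp
    thus "n2 e \<le> n2 (\<lambda>n. e n + s * L (dlt m) n)" using upper lower[OF dlt_D0[of m], of s] unfolding e_def by simp
  qed
  have eig: "J e m = - (\<i> * complex_of_real t) * e m" for m
  proof -
    have d2: "dlt m \<in> ell2" by (rule D0_ell2[OF dlt_D0])
    have "l2inner e (L (dlt m)) = l2inner e (J (dlt m)) - l * l2inner e (dlt m)"
      unfolding L_def using l2inner_diff_right[OF e2 JD0[OF dlt_D0] ell2_scale[OF d2]] l2inner_scale_right[OF e2 d2]
      by simp
    also have "l2inner e (J (dlt m)) = l2inner (J e) (dlt m)" unfolding J_def by (rule Jop_pair[OF dlt_D0])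
    finally have "cnj (J e m) - l * cnj (e m) = 0" using orth[of m] by (simp add: l2inner_dlt)
    hence "cnj (cnj (J e m) - l * cnj (e m)) = 0" by simp
    hence "J e m = cnj l * e m" by simp
    thus ?thesis by (simp add: l_def)
  qed
  have "e = (\<lambda>n. 0)"
    by (rule maxp[OF e2, of "- (\<i> * complex_of_real t)"]) (use eig J_def in auto)
  hence pz: "p n - z n = 0" for n using fun_cong[of e "\<lambda>n. 0" n] unfolding e_def by simp
  have "(\<lambda>n. Y n - \<i> * complex_of_real t * w n) = z"
  proof (rule ext)
    fix n show "Y n - \<i> * complex_of_real t * w n = z n" using pz[of n] unfolding p_def l_def by simp
  qed
  with wY show ?thesis by blast
qed

lemma adj_sub:
  assumes uv: "(u, v) \<in> graph_adjoint (graph_closure (graph_D0 (Jop d c \<xi> f)))"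
  shows "(u, v) \<in> graph_closure (graph_D0 (Jop d c \<xi> f))"
proof -
  define J where "J = Jop d c \<xi> f"
  define T where "T = graph_closure (graph_D0 (Jop d c \<xi> f))"
  have u: "u \<in> ell2" and v: "v \<in> ell2" and adj: "\<And>x' y'. (x', y') \<in> T \<Longrightarrow> l2inner u y' = l2inner v x'"
    using uv unfolding graph_adjoint_def T_def by auto
  define z where "z = (\<lambda>n. v n - \<i> * complex_of_real t * u n)"
  have z2: "z \<in> ell2" unfolding z_def by (rule ell2_diff[OF v ell2_scale[OF u]])
  obtain w Y where wY: "(w, Y) \<in> T" and Yz: "(\<lambda>n. Y n - \<i> * complex_of_real t * w n) = z"
    using surj[OF z2] unfolding T_def by blast
  have w: "w \<in> ell2" and Y: "Y \<in> ell2" using T_ell2 wY unfolding T_def by auto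
  define e where "e = (\<lambda>n. u n - w n)"
  have e2: "e \<in> ell2" unfolding e_def by (rule ell2_diff[OF u w])
  have eig: "J e m = \<i> * complex_of_real t * e m" for m
  proof -
    have GT: "(dlt m, J (dlt m)) \<in> T" unfolding T_def J_def by (rule G_T[OF dlt_D0])
    have a1: "l2inner u (J (dlt m)) = cnj (v m)" using adj[OF GT] by (simp add: l2inner_dlt)
    have a2: "l2inner w (J (dlt m)) = cnj (Y m)" using T_sym[OF wY[unfolded T_def] GT[unfolded T_def]]
      by (simp add: l2inner_dlt)
    have "l2inner e (J (dlt m)) = l2inner u (J (dlt m)) - l2inner w (J (dlt m))"
      unfolding e_def by (rule l2inner_diff_left[OF u w]) (unfold J_def, rule JD0_ell2[OF dlt_D0])
    also have "l2inner e (J (dlt m)) = cnj (J e m)"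
      unfolding J_def by (simp add: Jop_pair[OF dlt_D0] l2inner_dlt)
    finally have "cnj (J e m) = cnj (v m) - cnj (Y m)" using a1 a2 by simp
    hence h1: "J e m = v m - Y m" by (metis complex_cnj_cnj complex_cnj_diff)
    have "Y m - \<i> * complex_of_real t * w m = v m - \<i> * complex_of_real t * u m"
      using fun_cong[OF Yz, of m] unfolding z_def by simp
    hence h2: "v m = Y m - \<i> * complex_of_real t * w m + \<i> * complex_of_real t * u m"
      by (metis diff_add_cancel)
    show ?thesis unfolding h1 h2 by (simp add: e_def algebra_simps)
  qed
  have "e = (\<lambda>n. 0)"
    by (rule maxp[OF e2, of "\<i> * complex_of_real t"]) (use eig J_def in auto)
  hence uw: "u m = w m" for m using fun_cong[of e "\<lambda>n. 0" m] unfolding e_def by simp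
  have "v m = Y m" for m using fun_cong[OF Yz, of m] uw[of m] unfolding z_def by simp
  hence "u = w" "v = Y" using uw by auto
  thus ?thesis using wY unfolding T_def by simp
qed

theorem Jop_esa: "ess_self_adjoint (graph_D0 (Jop d c \<xi> f))"
  unfolding ess_self_adjoint_def self_adjoint_graph_def
proof
  show "graph_closure (graph_D0 (Jop d c \<xi> f)) \<subseteq> graph_adjoint (graph_closure (graph_D0 (Jop d c \<xi> f)))"
  proof (clarify)
    fix x y assume xy: "(x, y) \<in> graph_closure (graph_D0 (Jop d c \<xi> f))"
    show "(x, y) \<in> graph_adjoint (graph_closure (graph_D0 (Jop d c \<xi> f)))"
      unfolding graph_adjoint_def using T_ell2[OF xy] T_sym[OF xy] by auto
  qed
  show "graph_adjoint (graph_closure (graph_D0 (Jop d c \<xi> f))) \<subseteq> graph_closure (graph_D0 (Jop d c \<xi> f))"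
    using adj_sub by auto
qed

end



lemma amgm_w:
  fixes c a b r :: real
  assumes "0 < r" "0 \<le> c"
  shows "2 * c * a * b \<le> c / r * a\<^sup>2 + r * c * b\<^sup>2"
proof -
  have "0 \<le> c / r * (a - r * b)\<^sup>2" using assms by simp
  also have "c / r * (a - r * b)\<^sup>2 = c / r * a\<^sup>2 + r * c * b\<^sup>2 - 2 * c * a * b"
    using assms by (simp add: power2_diff field_simps power2_eq_square)
  finally show ?thesis by simp
qed

lemma lower_bound:
  fixes d N :: nat and c f :: "nat \<Rightarrow> real" and \<kappa> B :: real
  assumes c0: "\<And>n. 0 \<le> c n" and cm: "\<And>m n. m \<le> n \<Longrightarrow> c m \<le> c n"
    and f0: "\<And>n. 0 \<le> f n" and ka: "2 \<le> \<kappa>"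
    and fN: "\<And>n. N \<le> n \<Longrightarrow> \<kappa> * cmod \<xi> * c n \<le> f n"
    and B: "\<And>n. n < N \<Longrightarrow> c n \<le> B" and B0: "0 \<le> B"
    and psi: "\<psi> \<in> D0"
  shows "- (2 * cmod \<xi> * B) * n2 \<psi> \<le> Re (l2inner \<psi> (Jop d c \<xi> f \<psi>))"
proof -
  obtain S where S: "\<And>m. S \<le> m \<Longrightarrow> \<psi> m = 0" using D0_bound[OF psi] by blast
  define R where "R = S + d"
  define a where "a n = cmod (\<psi> n)" for n
  have a0: "\<And>m. S \<le> m \<Longrightarrow> a m = 0" using S by (simp add: a_def)
  define G where "G m = \<xi> * complex_of_real (c m) * cnj (\<psi> (m+d)) * \<psi> m" for m
  define H where "H m = cnj \<xi> * complex_of_real (c m) * cnj (\<psi> m) * \<psi> (m+d)" for m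
  have ip: "l2inner \<psi> (Jop d c \<xi> f \<psi>) = (\<Sum>n<R. cnj (\<psi> n) * Jop d c \<xi> f \<psi> n)"
    by (rule l2inner_finite) (simp add: R_def S)
  have pt: "cnj (\<psi> n) * Jop d c \<xi> f \<psi> n = complex_of_real (f n * (a n)\<^sup>2) + (if d \<le> n then G (n-d) else 0) + H n" for n
  proof -
    have "cnj (\<psi> n) * (complex_of_real (f n) * \<psi> n) = complex_of_real (f n * (a n)\<^sup>2)"
    proof -
      have sq: "cnj (\<psi> n) * \<psi> n = complex_of_real ((a n)\<^sup>2)" unfolding a_def
        by (metis complex_norm_square mult.commute)
      have "cnj (\<psi> n) * (complex_of_real (f n) * \<psi> n) = complex_of_real (f n) * (cnj (\<psi> n) * \<psi> n)"
        by (simp only: mult.left_commute)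
      also have "\<dots> = complex_of_real (f n * (a n)\<^sup>2)" unfolding sq by (simp only: of_real_mult)
      finally show ?thesis .
    qed
    thus ?thesis by (cases "d \<le> n") (simp_all add: Jop_def G_def H_def algebra_simps)
  qed
  have "(\<Sum>n<R. cnj (\<psi> n) * Jop d c \<xi> f \<psi> n)
      = (\<Sum>n<R. complex_of_real (f n * (a n)\<^sup>2)) + (\<Sum>n<R. (if d \<le> n then G (n-d) else 0)) + (\<Sum>n<R. H n)"
    by (simp add: pt sum.distrib)
  also have "(\<Sum>n<R. (if d \<le> n then G (n-d) else 0)) = (\<Sum>m<S. G m)"
    unfolding R_def by (rule sum_shift_if)
  also have "(\<Sum>n<R. H n) = (\<Sum>n<S. H n)"
    unfolding R_def by (rule sum_extend_zero) (simp add: H_def S)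
  finally have ipe: "l2inner \<psi> (Jop d c \<xi> f \<psi>) = (\<Sum>n<R. complex_of_real (f n * (a n)\<^sup>2)) + (\<Sum>m<S. G m) + (\<Sum>n<S. H n)"
    using ip by simp
  have GH: "G m = cnj (H m)" for m by (simp add: G_def H_def)
  have ReH: "- (cmod \<xi> * c m * a m * a (m+d)) \<le> Re (H m)" for m
  proof -
    have "cmod (H m) = cmod \<xi> * c m * a m * a (m+d)" using c0[of m] by (simp add: H_def a_def norm_mult)
    thus ?thesis using abs_Re_le_cmod[of "H m"] by linarith
  qed
  have Re1: "Re (l2inner \<psi> (Jop d c \<xi> f \<psi>)) = (\<Sum>n<R. f n * (a n)\<^sup>2) + (\<Sum>m<S. 2 * Re (H m))"
    unfolding ipe by (simp add: GH Re_sum sum.distrib[symmetric] sum_distrib_left)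
  define w where "w m = (m < N \<and> N \<le> m + d)" for m
  define al where "al m = (if w m then c m / (\<kappa> - 1) else c m)" for m
  define ga where "ga m = (if w m then (\<kappa> - 1) * c m else c m)" for m
  have amgm: "2 * c m * a m * a (m+d) \<le> al m * (a m)\<^sup>2 + ga m * (a (m+d))\<^sup>2" for m
  proof (cases "w m")
    case True
    have "2 * c m * a m * a (m+d) \<le> c m / (\<kappa> - 1) * (a m)\<^sup>2 + (\<kappa> - 1) * c m * (a (m+d))\<^sup>2"
      by (rule amgm_w) (use ka c0 in auto)
    thus ?thesis using True by (simp add: al_def ga_def)
  next
    case False
    have "2 * c m * a m * a (m+d) \<le> c m / 1 * (a m)\<^sup>2 + 1 * c m * (a (m+d))\<^sup>2"
      by (rule amgm_w) (use c0 in auto)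
    thus ?thesis using False by (simp add: al_def ga_def)
  qed
  define P where "P n = (if d \<le> n then ga (n-d) else 0)" for n
  have sumw: "(\<Sum>m<S. 2 * c m * a m * a (m+d)) \<le> (\<Sum>n<R. (al n + P n) * (a n)\<^sup>2)"
  proof -
    have "(\<Sum>m<S. 2 * c m * a m * a (m+d)) \<le> (\<Sum>m<S. al m * (a m)\<^sup>2 + ga m * (a (m+d))\<^sup>2)"
      by (rule sum_mono) (rule amgm)
    also have "\<dots> = (\<Sum>m<S. al m * (a m)\<^sup>2) + (\<Sum>m<S. ga m * (a (m+d))\<^sup>2)" by (rule sum.distrib)
    also have "(\<Sum>m<S. al m * (a m)\<^sup>2) = (\<Sum>n<R. al n * (a n)\<^sup>2)"
      unfolding R_def by (rule sum_extend_zero[symmetric]) (simp add: a0)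
    also have "(\<Sum>m<S. ga m * (a (m+d))\<^sup>2) = (\<Sum>n<R. (if d \<le> n then ga (n-d) * (a (n-d+d))\<^sup>2 else 0))"
      unfolding R_def by (rule sum_shift_if[symmetric])
    also have "\<dots> = (\<Sum>n<R. P n * (a n)\<^sup>2)"
      by (rule sum.cong) (auto simp: P_def)
    finally show ?thesis by (simp add: sum.distrib[symmetric] algebra_simps)
  qed
  have ptw: "- (2 * cmod \<xi> * B) \<le> f n - cmod \<xi> * (al n + P n)" for n
  proof (cases "n < N")
    case True
    have "al n \<le> c n"
    proof (cases "w n")
      case True
      have "c n / (\<kappa> - 1) \<le> c n / 1" using ka c0[of n] by (intro divide_left_mono) auto
      thus ?thesis using True by (simp add: al_def)
    qed (simp add: al_def)
    hence al: "al n \<le> B" using B[OF True] by simp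
    have P: "P n \<le> B"
    proof (cases "d \<le> n")
      case True2: True
      have "\<not> w (n-d)" using True True2 by (simp add: w_def)
      hence "P n = c (n-d)" using True2 by (simp add: P_def ga_def)
      also have "\<dots> \<le> B" using B[of "n-d"] True by simp
      finally show ?thesis .
    qed (simp add: P_def B0)
    have "cmod \<xi> * (al n + P n) \<le> cmod \<xi> * (2 * B)" using al P by (intro mult_left_mono) auto
    thus ?thesis using f0[of n] by simp
  next
    case False
    have al: "al n = c n" using False by (simp add: al_def w_def)
    have P: "P n \<le> (\<kappa> - 1) * c n"
    proof (cases "d \<le> n")
      case True
      have cnd: "c (n-d) \<le> c n" by (rule cm) simp
      show ?thesis
      proof (cases "w (n-d)")
        case True2: True
        thus ?thesis using True cnd ka by (simp add: P_def ga_def mult_left_mono)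
      next
        case False2: False
        have "c n \<le> (\<kappa> - 1) * c n" using ka c0[of n] by (simp add: mult_le_cancel_right1)
        thus ?thesis using True False2 cnd by (simp add: P_def ga_def)
      qed
    next
      case False
      thus ?thesis using ka c0[of n] by (simp add: P_def)
    qed
    have "cmod \<xi> * (al n + P n) \<le> cmod \<xi> * (\<kappa> * c n)" using al P by (intro mult_left_mono) (auto simp: algebra_simps)
    also have "\<dots> \<le> f n" using fN[of n] False by (simp add: mult.assoc mult.left_commute)
    finally have "0 \<le> f n - cmod \<xi> * (al n + P n)" by simp
    moreover have "0 \<le> 2 * cmod \<xi> * B" using B0 by simp
    ultimately show ?thesis by linarith
  qed
  have n2psi: "n2 \<psi> = (\<Sum>n<R. (a n)\<^sup>2)"
    unfolding n2_def a_def by (rule suminf_finite) (auto simp: R_def S)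
  have "- (2 * cmod \<xi> * B) * n2 \<psi> = (\<Sum>n<R. - (2 * cmod \<xi> * B) * (a n)\<^sup>2)"
    unfolding n2psi by (simp add: sum_distrib_left)
  also have "\<dots> \<le> (\<Sum>n<R. (f n - cmod \<xi> * (al n + P n)) * (a n)\<^sup>2)"
    by (rule sum_mono) (rule mult_right_mono[OF ptw], simp)
  also have "\<dots> = (\<Sum>n<R. f n * (a n)\<^sup>2) - cmod \<xi> * (\<Sum>n<R. (al n + P n) * (a n)\<^sup>2)"
    by (simp add: sum_subtractf sum_distrib_left left_diff_distrib mult.assoc)
  also have "\<dots> \<le> (\<Sum>n<R. f n * (a n)\<^sup>2) - cmod \<xi> * (\<Sum>m<S. 2 * c m * a m * a (m+d))"
    using sumw by (simp add: mult_left_mono)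
  also have "\<dots> \<le> (\<Sum>n<R. f n * (a n)\<^sup>2) + (\<Sum>m<S. 2 * Re (H m))"
  proof -
    have "(\<Sum>m<S. - (2 * (cmod \<xi> * c m * a m * a (m+d)))) \<le> (\<Sum>m<S. 2 * Re (H m))"
    proof (rule sum_mono)
      fix m show "- (2 * (cmod \<xi> * c m * a m * a (m+d))) \<le> 2 * Re (H m)" using ReH[of m] by linarith
    qed
    moreover have "cmod \<xi> * (\<Sum>m<S. 2 * c m * a m * a (m+d)) = (\<Sum>m<S. 2 * (cmod \<xi> * c m * a m * a (m+d)))"
      by (simp add: sum_distrib_left mult_ac)
    moreover have "(\<Sum>m<S. - (2 * (cmod \<xi> * c m * a m * a (m+d)))) = - (\<Sum>m<S. 2 * (cmod \<xi> * c m * a m * a (m+d)))"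
      by (rule sum_negf)
    ultimately show ?thesis by linarith
  qed
  also have "\<dots> = Re (l2inner \<psi> (Jop d c \<xi> f \<psi>))" by (rule Re1[symmetric])
  finally show ?thesis .
qed



theorem proposition3p5:
  fixes k l N :: nat and \<xi> :: complex and f :: "nat \<Rightarrow> real" and \<kappa> :: real
  assumes "l < k"
    and "\<forall>n. f n \<ge> 0"
    and "\<kappa> \<ge> 2"
    and "\<forall>n\<ge>N. f n \<ge> \<kappa> * cmod \<xi> * beta k l (int n)"
  shows "ess_self_adjoint (graph_D0 (A_op k l \<xi> f))
     \<and> (\<kappa> > 2 \<longrightarrow> (\<forall>\<psi>\<in>D0.
           Im (l2inner \<psi> (A_op k l \<xi> f \<psi>)) = 0 \<and>
           Re (l2inner \<psi> (A_op k l \<xi> f \<psi>))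
             \<ge> - (2 * cmod \<xi> * beta k l (int N - 1) * \<kappa> / (\<kappa> - 2)) * (l2norm \<psi>)\<^sup>2))"
proof -
  define d where "d = k - l"
  define c where "c = cf k l"
  have Aeq: "A_op k l \<xi> f = Jop d c \<xi> f" unfolding d_def c_def by (rule A_op_Jop[OF assms(1)])
  have c0: "\<And>n. 0 \<le> c n" unfolding c_def by (rule cf_nonneg)
  have cm: "\<And>m n. m \<le> n \<Longrightarrow> c m \<le> c n" unfolding c_def by (rule cf_mono)
  have f0: "\<And>n. 0 \<le> f n" using assms(2) by blast
  have fN: "\<And>n. N \<le> n \<Longrightarrow> \<kappa> * cmod \<xi> * c n \<le> f n" using assms(4) unfolding c_def beta_cf by blast
  define t where "t = 2 * cmod \<xi> * c N + 1"
  have tpos: "0 < t"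
  proof -
    have "0 \<le> 2 * cmod \<xi> * c N" using c0[of N] by simp
    thus ?thesis unfolding t_def by linarith
  qed
  have H: "cmod \<xi> * ((if d \<le> n then c (n-d) else 0) + c n) < sqrt ((f n)\<^sup>2 + t\<^sup>2)" for n
  proof -
    have "(if d \<le> n then c (n-d) else 0) \<le> c n" using cm[of "n-d" n] c0[of n] by auto
    hence X: "cmod \<xi> * ((if d \<le> n then c (n-d) else 0) + c n) \<le> 2 * cmod \<xi> * c n"
      by (simp add: mult_left_mono algebra_simps)
    show ?thesis
    proof (cases "N \<le> n")
      case True
      have "2 * cmod \<xi> * c n \<le> \<kappa> * cmod \<xi> * c n" using assms(3) c0[of n] by (simp add: mult_right_mono)
      also have "\<dots> \<le> f n" by (rule fN[OF True])
      also have "f n = sqrt ((f n)\<^sup>2)" using f0[of n] by simp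
      also have "\<dots> < sqrt ((f n)\<^sup>2 + t\<^sup>2)" using tpos by (intro real_sqrt_less_mono) simp
      finally show ?thesis using X by linarith
    next
      case False
      have "2 * cmod \<xi> * c n \<le> 2 * cmod \<xi> * c N" using cm[of n N] False by (simp add: mult_left_mono)
      also have "\<dots> < t" unfolding t_def by simp
      also have "t = sqrt (t\<^sup>2)" using tpos by simp
      also have "\<dots> \<le> sqrt ((f n)\<^sup>2 + t\<^sup>2)" by simp
      finally show ?thesis using X by linarith
    qed
  qed
  have esa: "ess_self_adjoint (graph_D0 (Jop d c \<xi> f))"
    by (rule Jop_esa[where t=t, OF c0 tpos H])
  have low: "\<forall>\<psi>\<in>D0. Im (l2inner \<psi> (A_op k l \<xi> f \<psi>)) = 0 \<and>
           Re (l2inner \<psi> (A_op k l \<xi> f \<psi>))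
             \<ge> - (2 * cmod \<xi> * beta k l (int N - 1) * \<kappa> / (\<kappa> - 2)) * (l2norm \<psi>)\<^sup>2"
    if ka: "\<kappa> > 2"
  proof
    fix \<psi> assume psi: "\<psi> \<in> D0"
    show "Im (l2inner \<psi> (A_op k l \<xi> f \<psi>)) = 0 \<and>
           Re (l2inner \<psi> (A_op k l \<xi> f \<psi>))
             \<ge> - (2 * cmod \<xi> * beta k l (int N - 1) * \<kappa> / (\<kappa> - 2)) * (l2norm \<psi>)\<^sup>2"
    proof
      show "Im (l2inner \<psi> (A_op k l \<xi> f \<psi>)) = 0"
        unfolding Aeq by (rule real_form[where t=t, OF c0 tpos H psi])
      define B where "B = (if N = 0 then 0 else c (N-1))"
      have B: "\<And>n. n < N \<Longrightarrow> c n \<le> B" unfolding B_def using cm by auto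
      have B0: "0 \<le> B" unfolding B_def using c0 by auto
      have lb: "- (2 * cmod \<xi> * B) * n2 \<psi> \<le> Re (l2inner \<psi> (Jop d c \<xi> f \<psi>))"
        by (rule lower_bound[OF c0 cm f0 _ fN B B0 psi]) (use assms(3) in auto)
      define \<beta> where "\<beta> = beta k l (int N - 1)"
      have kk: "1 \<le> \<kappa> / (\<kappa> - 2)" using ka by simp
      have Bb: "B \<le> \<beta> * \<kappa> / (\<kappa> - 2)"
      proof (cases "N = 0")
        case True
        have "0 \<le> \<beta> * \<kappa> / (\<kappa> - 2)" unfolding \<beta>_def using beta_nonneg ka by simp
        thus ?thesis using True B_def by simp
      next
        case False
        have e: "int N - 1 = int (N-1)" using False by simp
        have "\<beta> = cf k l (N-1)" unfolding \<beta>_def e by (rule beta_cf)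
        hence "\<beta> = B" unfolding B_def c_def using False by simp
        moreover have "B * 1 \<le> B * (\<kappa> / (\<kappa> - 2))" by (rule mult_left_mono[OF kk B0])
        ultimately show ?thesis by simp
      qed
      have n2p: "(l2norm \<psi>)\<^sup>2 = n2 \<psi>" by (rule l2norm_sq[OF D0_ell2[OF psi]])
      have n2nn: "0 \<le> n2 \<psi>" by (rule n2_nonneg[OF D0_ell2[OF psi]])
      have "2 * cmod \<xi> * B \<le> 2 * cmod \<xi> * (\<beta> * \<kappa> / (\<kappa> - 2))"
        by (rule mult_left_mono[OF Bb]) simp
      also have "2 * cmod \<xi> * (\<beta> * \<kappa> / (\<kappa> - 2)) = 2 * cmod \<xi> * \<beta> * \<kappa> / (\<kappa> - 2)"
        by simp
      finally have "(2 * cmod \<xi> * B) * n2 \<psi> \<le> (2 * cmod \<xi> * \<beta> * \<kappa> / (\<kappa> - 2)) * n2 \<psi>"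
        by (rule mult_right_mono[OF _ n2nn])
      hence "- (2 * cmod \<xi> * \<beta> * \<kappa> / (\<kappa> - 2)) * n2 \<psi> \<le> - (2 * cmod \<xi> * B) * n2 \<psi>"
        by simp
      thus "Re (l2inner \<psi> (A_op k l \<xi> f \<psi>)) \<ge> - (2 * cmod \<xi> * beta k l (int N - 1) * \<kappa> / (\<kappa> - 2)) * (l2norm \<psi>)\<^sup>2"
        using lb unfolding Aeq n2p \<beta>_def by linarith
    qed
  qed
  show ?thesis using esa low unfolding Aeq by blast
qed


end
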